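(* For $n\ge2$, the group $PL_n=\ker(\psi_P)$ is generated by the elements $$\lambda_{ij}^{(0)}=\lambda_{ij},\quad \lambda_{ij}^{(i)}=\lambda_{ij}^{\gamma_i},\quad \lambda_{ij}^{(j)}=\lambda_{ij}^{\gamma_j},\quad \lambda_{ij}^{(ij)}=\lambda_{ij}^{\gamma_i\gamma_j},\qquad 1\le i<j\le n.$$
   Context: For $n\ge 2$, the twisted virtual braid group $TVB_n$ is the group with generators $\sigma_1,\dots,\sigma_{n-1}$, $\rho_1,\dots,\rho_{n-1}$, $\gamma_1,\dots,\gamma_n$ and defining relations: $\sigma_i\sigma_{i+1}\sigma_i=\sigma_{i+1}\sigma_i\sigma_{i+1}$ ($1\le i\le n-2$); $\sigma_i\sigma_j=\sigma_j\sigma_i$ ($|i-j|\ge 2$); $\rho_i^2=1$; $\rho_i\rho_j=\rho_j\rho_i$ ($|i-j|\ge2$); $\rho_i\rho_{i+1}\rho_i=\rho_{i+1}\rho_i\rho_{i+1}$ ($1\le i\le n-2$); $\sigma_i\rho_j=\rho_j\sigma_i$ ($|i-j|\ge 2$); $\rho_i\rho_{i+1}\sigma_i=\sigma_{i+1}\rho_i\rho_{i+1}$ ($1\le i\le n-2$); $\gamma_i^2=1$ and $\gamma_i\gamma_j=\gamma_j\gamma_i$ (all $i,j$); $\gamma_j\rho_i=\rho_i\gamma_j$ and $\gamma_j\sigma_i=\sigma_i\gamma_j$ for $j\notin\{i,i+1\}$; $\rho_i\gamma_i=\gamma_{i+1}\rho_i$ ($1\le i\le n-1$); $\rho_i\sigma_i\rho_i=\gamma_{i+1}\gamma_i\sigma_i\gamma_i\gamma_{i+1}$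 ($1\le i\le n-1$). $TVP_n$ is the kernel of $\varphi_P:TVB_n\to S_n$, $\sigma_i,\rho_i\mapsto(i,i+1)$, $\gamma_j\mapsto e$. In $TVB_n$ define $\lambda_{i,i+1}=\rho_i\sigma_i^{-1}$, $\lambda_{i+1,i}=\rho_i\lambda_{i,i+1}\rho_i$ ($1\le i\le n-1$), and for $1\le i<j-1\le n-1$: $\lambda_{ij}=\rho_{j-1}\cdots\rho_{i+1}\lambda_{i,i+1}\rho_{i+1}\cdots\rho_{j-1}$, $\lambda_{ji}=\rho_{j-1}\cdots\rho_{i+1}\lambda_{i+1,i}\rho_{i+1}\cdots\rho_{j-1}$. $A_n=\langle\gamma_1,\dots,\gamma_n\rangle$, and $\psi_P:TVP_n\to A_n$ is the homomorphism with $\lambda_{kl}\mapsto e$, $\gamma_j\mapsto\gamma_j$; $PL_n=\ker\psi_P$. Conjugation notation: $a^b=b^{-1}ab$. *)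

theory Defs
  imports "HOL-Algebra.Algebra" "HOL-Combinatorics.Transposition"
begin

text \<open>Generators: S i = sigma_i, R i = rho_i, G j = gamma_j (1-based indices).\<close>
datatype tgen = S nat | R nat | G nat

text \<open>A letter is a generator together with a flag: False = the generator, True = its inverse.\<close>
type_synonym tletter = "tgen \<times> bool"
type_synonym tword = "tletter list"

definition letter_inv :: "tletter \<Rightarrow> tletter" where
  "letter_inv x = (fst x, \<not> snd x)"

fun valid_gen :: "nat \<Rightarrow> tgen \<Rightarrow> bool" where
  "valid_gen n (S i) = (1 \<le> i \<and> i \<le> n - 1)"
| "valid_gen n (R i) = (1 \<le> i \<and> i \<le> n - 1)"
| "valid_gen n (G j) = (1 \<le> j \<and> j \<le> n)"

definition valid_word :: "nat \<Rightarrow> tword \<Rightarrow> bool" where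
  "valid_word n w = (\<forall>x \<in> set w. valid_gen n (fst x))"

abbreviation sg :: "nat \<Rightarrow> tletter" where "sg i \<equiv> (S i, False)"
abbreviation sgi :: "nat \<Rightarrow> tletter" where "sgi i \<equiv> (S i, True)"
abbreviation rh :: "nat \<Rightarrow> tletter" where "rh i \<equiv> (R i, False)"
abbreviation gm :: "nat \<Rightarrow> tletter" where "gm i \<equiv> (G i, False)"

definition tvb_rels :: "nat \<Rightarrow> (tword \<times> tword) set" where
  "tvb_rels n =
     {([sg i, sg (i+1), sg i], [sg (i+1), sg i, sg (i+1)]) | i. 1 \<le> i \<and> i \<le> n - 2}
   \<union> {([sg i, sg j], [sg j, sg i]) | i j. 1 \<le> i \<and> i \<le> n - 1 \<and> 1 \<le> j \<and> j \<le> n - 1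
                                        \<and> (i + 2 \<le> j \<or> j + 2 \<le> i)}
   \<union> {([rh i, rh i], []) | i. 1 \<le> i \<and> i \<le> n - 1}
   \<union> {([rh i, rh j], [rh j, rh i]) | i j. 1 \<le> i \<and> i \<le> n - 1 \<and> 1 \<le> j \<and> j \<le> n - 1
                                        \<and> (i + 2 \<le> j \<or> j + 2 \<le> i)}
   \<union> {([rh i, rh (i+1), rh i], [rh (i+1), rh i, rh (i+1)]) | i. 1 \<le> i \<and> i \<le> n - 2}
   \<union> {([sg i, rh j], [rh j, sg i]) | i j. 1 \<le> i \<and> i \<le> n - 1 \<and> 1 \<le> j \<and> j \<le> n - 1
                                        \<and> (i + 2 \<le> j \<or> j + 2 \<le> i)}
   \<union> {([rh i, rh (i+1), sg i], [sg (i+1), rh i, rh (i+1)]) | i. 1 \<le> i \<and> i \<le> n - 2}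
   \<union> {([gm i, gm i], []) | i. 1 \<le> i \<and> i \<le> n}
   \<union> {([gm i, gm j], [gm j, gm i]) | i j. 1 \<le> i \<and> i \<le> n \<and> 1 \<le> j \<and> j \<le> n}
   \<union> {([gm j, rh i], [rh i, gm j]) | i j. 1 \<le> i \<and> i \<le> n - 1 \<and> 1 \<le> j \<and> j \<le> n
                                        \<and> j \<noteq> i \<and> j \<noteq> i + 1}
   \<union> {([gm j, sg i], [sg i, gm j]) | i j. 1 \<le> i \<and> i \<le> n - 1 \<and> 1 \<le> j \<and> j \<le> n
                                        \<and> j \<noteq> i \<and> j \<noteq> i + 1}
   \<union> {([rh i, gm i], [gm (i+1), rh i]) | i. 1 \<le> i \<and> i \<le> n - 1}
   \<union> {([rh i, sg i, rh i], [gm (i+1), gm i, sg i, gm i, gm (i+1)]) | i. 1 \<le> i \<and> i \<le> n - 1}"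

inductive tvb_eqv :: "nat \<Rightarrow> tword \<Rightarrow> tword \<Rightarrow> bool" for n where
  refl: "tvb_eqv n w w"
| sym: "tvb_eqv n u v \<Longrightarrow> tvb_eqv n v u"
| trans: "tvb_eqv n u v \<Longrightarrow> tvb_eqv n v w \<Longrightarrow> tvb_eqv n u w"
| cong: "tvb_eqv n u v \<Longrightarrow> tvb_eqv n (a @ u @ b) (a @ v @ b)"
| cancel: "tvb_eqv n [x, letter_inv x] []"
| rel: "(l, r) \<in> tvb_rels n \<Longrightarrow> tvb_eqv n l r"

definition tcls :: "nat \<Rightarrow> tword \<Rightarrow> tword set" where
  "tcls n w = {v. tvb_eqv n v w}"

definition TVB :: "nat \<Rightarrow> tword set monoid" where
  "TVB n = \<lparr> carrier = {tcls n w | w. valid_word n w},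
             monoid.mult = (\<lambda>A B. {w. \<exists>u \<in> A. \<exists>v \<in> B. tvb_eqv n w (u @ v)}),
             one = tcls n [] \<rparr>"

definition sigma :: "nat \<Rightarrow> nat \<Rightarrow> tword set" where "sigma n i = tcls n [sg i]"
definition rho :: "nat \<Rightarrow> nat \<Rightarrow> tword set" where "rho n i = tcls n [rh i]"
definition gamma :: "nat \<Rightarrow> nat \<Rightarrow> tword set" where "gamma n j = tcls n [gm j]"

fun perm_of_word :: "tword \<Rightarrow> nat \<Rightarrow> nat" where
  "perm_of_word [] = id"
| "perm_of_word ((S i, b) # w) = transpose i (i+1) \<circ> perm_of_word w"
| "perm_of_word ((R i, b) # w) = transpose i (i+1) \<circ> perm_of_word w"
| "perm_of_word ((G j, b) # w) = perm_of_word w"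

definition phiP :: "nat \<Rightarrow> tword set \<Rightarrow> nat \<Rightarrow> nat" where
  "phiP n A = perm_of_word (SOME w. w \<in> A \<and> valid_word n w)"

definition TVP :: "nat \<Rightarrow> tword set set" where
  "TVP n = kernel (TVB n) (sym_group n) (phiP n)"

definition lam_word :: "nat \<Rightarrow> nat \<Rightarrow> tword" where
  "lam_word k l =
    (if k < l then
       map rh (rev [k+1..<l]) @ [rh k, sgi k] @ map rh [k+1..<l]
     else
       map rh (rev [l+1..<k]) @ [rh l, rh l, sgi l, rh l] @ map rh [l+1..<k])"

definition lambda :: "nat \<Rightarrow> nat \<Rightarrow> nat \<Rightarrow> tword set" where
  "lambda n k l = tcls n (lam_word k l)"

definition An :: "nat \<Rightarrow> tword set set" where
  "An n = generate (TVB n) {gamma n j | j. 1 \<le> j \<and> j \<le> n}"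

definition tconj :: "nat \<Rightarrow> tword set \<Rightarrow> tword set \<Rightarrow> tword set" where
  "tconj n a b = inv\<^bsub>TVB n\<^esub> b \<otimes>\<^bsub>TVB n\<^esub> a \<otimes>\<^bsub>TVB n\<^esub> b"

definition is_psiP :: "nat \<Rightarrow> (tword set \<Rightarrow> tword set) \<Rightarrow> bool" where
  "is_psiP n \<psi> \<longleftrightarrow>
     \<psi> \<in> hom ((TVB n)\<lparr>carrier := TVP n\<rparr>) ((TVB n)\<lparr>carrier := An n\<rparr>)
     \<and> (\<forall>k l. 1 \<le> k \<and> k \<le> n \<and> 1 \<le> l \<and> l \<le> n \<and> k \<noteq> l \<longrightarrow> \<psi> (lambda n k l) = \<one>\<^bsub>TVB n\<^esub>)
     \<and> (\<forall>j. 1 \<le> j \<and> j \<le> n \<longrightarrow> \<psi> (gamma n j) = gamma n j)"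

definition PL_gens :: "nat \<Rightarrow> tword set set" where
  "PL_gens n = (\<Union>i \<in> {1..n}. \<Union>j \<in> {i<..n}.
     { lambda n i j,
       tconj n (lambda n i j) (gamma n i),
       tconj n (lambda n i j) (gamma n j),
       tconj n (lambda n i j) (gamma n i \<otimes>\<^bsub>TVB n\<^esub> gamma n j) })"

end

theory Submission
  imports Defs
begin


lemmas eqv_trans[trans] = tvb_eqv.trans

definition invw :: "tword \<Rightarrow> tword" where "invw w = rev (map letter_inv w)"

lemma letter_inv_inv[simp]: "letter_inv (letter_inv x) = x"
  by (simp add: letter_inv_def)

lemma invw_simps[simp]: "invw [] = []" "invw (x # w) = invw w @ [letter_inv x]"
  "invw (u @ v) = invw v @ invw u" "invw (invw w) = w"
  by (auto simp: invw_def rev_map comp_def)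

context fixes n :: nat begin

abbreviation eqv (infix "\<sim>\<sim>" 50) where "u \<sim>\<sim> v \<equiv> tvb_eqv n u v"

lemma eqv_refl: "u \<sim>\<sim> u" by (rule tvb_eqv.refl)
lemma eqv_sym: "u \<sim>\<sim> v \<Longrightarrow> v \<sim>\<sim> u" by (rule tvb_eqv.sym)

lemma eqv_ctx: "u \<sim>\<sim> v \<Longrightarrow> a @ u @ b \<sim>\<sim> a @ v @ b" by (rule tvb_eqv.cong)
lemma eqv_l: "u \<sim>\<sim> v \<Longrightarrow> a @ u \<sim>\<sim> a @ v" using tvb_eqv.cong[of n u v a "[]"] by simp
lemma eqv_r: "u \<sim>\<sim> v \<Longrightarrow> u @ b \<sim>\<sim> v @ b" using tvb_eqv.cong[of n u v "[]" b] by simp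
lemma eqv_app: "u \<sim>\<sim> u' \<Longrightarrow> v \<sim>\<sim> v' \<Longrightarrow> u @ v \<sim>\<sim> u' @ v'"
  using eqv_l eqv_r tvb_eqv.trans by blast

lemma eqv_sub: "u \<sim>\<sim> v \<Longrightarrow> x = a @ u @ b \<Longrightarrow> y = a @ v @ b \<Longrightarrow> x \<sim>\<sim> y"
  using eqv_ctx by simp

lemma cancel1: "[x, letter_inv x] \<sim>\<sim> []" by (rule tvb_eqv.cancel)
lemma cancel2: "[letter_inv x, x] \<sim>\<sim> []" using tvb_eqv.cancel[of n "letter_inv x"] by simp

lemma invw_cancel: "w @ invw w \<sim>\<sim> []"
proof (induction w)
  case Nil then show ?case by (simp add: eqv_refl)
next
  case (Cons x w)
  have "(x # w) @ invw (x # w) = [x] @ (w @ invw w) @ [letter_inv x]" by simp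
  also have "... \<sim>\<sim> [x] @ [] @ [letter_inv x]" by (rule eqv_ctx[OF Cons])
  finally show ?case using cancel1 tvb_eqv.trans by auto
qed

lemma invw_cancel2: "invw w @ w \<sim>\<sim> []"
  using invw_cancel[of "invw w"] by simp

lemma eqv_invw: assumes "u \<sim>\<sim> v" shows "invw u \<sim>\<sim> invw v"
proof -
  have "invw u \<sim>\<sim> invw u @ (v @ invw v) @ []"
    using eqv_ctx[OF eqv_sym[OF invw_cancel[of v]], of "invw u" "[]"] by simp
  also have "... \<sim>\<sim> invw u @ (u @ invw v) @ []"
    using eqv_ctx[OF eqv_r[OF eqv_sym[OF assms]], of "invw u" "[]"] by simp
  also have "invw u @ (u @ invw v) @ [] = (invw u @ u) @ invw v" by simp
  also have "... \<sim>\<sim> [] @ invw v" by (rule eqv_r[OF invw_cancel2])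
  finally show ?thesis by simp
qed

lemma rel_eqv: "(l, r) \<in> tvb_rels n \<Longrightarrow> l \<sim>\<sim> r" by (rule tvb_eqv.rel)

lemma R_rr: "1 \<le> i \<Longrightarrow> i \<le> n - 1 \<Longrightarrow> [rh i, rh i] \<sim>\<sim> []"
  by (rule rel_eqv) (auto simp: tvb_rels_def)
lemma R_rcomm: "1 \<le> i \<Longrightarrow> i \<le> n - 1 \<Longrightarrow> 1 \<le> j \<Longrightarrow> j \<le> n - 1 \<Longrightarrow> i + 2 \<le> j \<or> j + 2 \<le> i
  \<Longrightarrow> [rh i, rh j] \<sim>\<sim> [rh j, rh i]"
  by (rule rel_eqv) (auto simp: tvb_rels_def)
lemma R_rbraid: "1 \<le> i \<Longrightarrow> i \<le> n - 2 \<Longrightarrow> [rh i, rh (i+1), rh i] \<sim>\<sim> [rh (i+1), rh i, rh (i+1)]"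
  by (rule rel_eqv) (auto simp: tvb_rels_def)
lemma R_srcomm: "1 \<le> i \<Longrightarrow> i \<le> n - 1 \<Longrightarrow> 1 \<le> j \<Longrightarrow> j \<le> n - 1 \<Longrightarrow> i + 2 \<le> j \<or> j + 2 \<le> i
  \<Longrightarrow> [sg i, rh j] \<sim>\<sim> [rh j, sg i]"
  by (rule rel_eqv) (auto simp: tvb_rels_def)
lemma R_mixed: "1 \<le> i \<Longrightarrow> i \<le> n - 2 \<Longrightarrow> [rh i, rh (i+1), sg i] \<sim>\<sim> [sg (i+1), rh i, rh (i+1)]"
  by (rule rel_eqv) (auto simp: tvb_rels_def)
lemma R_gg: "1 \<le> i \<Longrightarrow> i \<le> n \<Longrightarrow> [gm i, gm i] \<sim>\<sim> []"
  by (rule rel_eqv) (auto simp: tvb_rels_def)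
lemma R_gcomm: "1 \<le> i \<Longrightarrow> i \<le> n \<Longrightarrow> 1 \<le> j \<Longrightarrow> j \<le> n \<Longrightarrow> [gm i, gm j] \<sim>\<sim> [gm j, gm i]"
  by (rule rel_eqv) (auto simp: tvb_rels_def)
lemma R_gr: "1 \<le> i \<Longrightarrow> i \<le> n - 1 \<Longrightarrow> 1 \<le> j \<Longrightarrow> j \<le> n \<Longrightarrow> j \<noteq> i \<Longrightarrow> j \<noteq> i + 1
  \<Longrightarrow> [gm j, rh i] \<sim>\<sim> [rh i, gm j]"
  by (rule rel_eqv) (auto simp: tvb_rels_def)
lemma R_gs: "1 \<le> i \<Longrightarrow> i \<le> n - 1 \<Longrightarrow> 1 \<le> j \<Longrightarrow> j \<le> n \<Longrightarrow> j \<noteq> i \<Longrightarrow> j \<noteq> i + 1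
  \<Longrightarrow> [gm j, sg i] \<sim>\<sim> [sg i, gm j]"
  by (rule rel_eqv) (auto simp: tvb_rels_def)
lemma R_rg: "1 \<le> i \<Longrightarrow> i \<le> n - 1 \<Longrightarrow> [rh i, gm i] \<sim>\<sim> [gm (i+1), rh i]"
  by (rule rel_eqv) (auto simp: tvb_rels_def)
lemma R_rsr: "1 \<le> i \<Longrightarrow> i \<le> n - 1 \<Longrightarrow> [rh i, sg i, rh i] \<sim>\<sim> [gm (i+1), gm i, sg i, gm i, gm (i+1)]"
  by (rule rel_eqv) (auto simp: tvb_rels_def)


lemma comm_inv: assumes "[x, y] \<sim>\<sim> [y, x]" shows "[letter_inv x, y] \<sim>\<sim> [y, letter_inv x]"
proof -
  have "[letter_inv x, y] \<sim>\<sim> [letter_inv x, y] @ [x, letter_inv x]"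
    using eqv_l[OF eqv_sym[OF cancel1[of x]], of "[letter_inv x, y]"] by simp
  also have "... = [letter_inv x] @ [y, x] @ [letter_inv x]" by simp
  also have "... \<sim>\<sim> [letter_inv x] @ [x, y] @ [letter_inv x]" by (rule eqv_ctx[OF eqv_sym[OF assms]])
  also have "... = [letter_inv x, x] @ [y, letter_inv x]" by simp
  also have "... \<sim>\<sim> [] @ [y, letter_inv x]" by (rule eqv_r[OF cancel2])
  finally show ?thesis by simp
qed

lemma comm_sym: "[x, y] \<sim>\<sim> [y, x] \<Longrightarrow> [y, x] \<sim>\<sim> [x, y]" by (rule eqv_sym)

lemma inv_rh: assumes "1 \<le> i" "i \<le> n - 1" shows "[(R i, True)] \<sim>\<sim> [rh i]"
proof -
  have "[(R i, True)] \<sim>\<sim> [(R i, True)] @ [rh i, rh i]"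
    using eqv_l[OF eqv_sym[OF R_rr[OF assms]], of "[(R i, True)]"] by simp
  also have "... = [(R i, True), letter_inv (R i, True)] @ [rh i]" by (simp add: letter_inv_def)
  also have "... \<sim>\<sim> [] @ [rh i]" by (rule eqv_r[OF cancel1])
  finally show ?thesis by simp
qed

lemma inv_gm: assumes "1 \<le> i" "i \<le> n" shows "[(G i, True)] \<sim>\<sim> [gm i]"
proof -
  have "[(G i, True)] \<sim>\<sim> [(G i, True)] @ [gm i, gm i]"
    using eqv_l[OF eqv_sym[OF R_gg[OF assms]], of "[(G i, True)]"] by simp
  also have "... = [(G i, True), letter_inv (G i, True)] @ [gm i]" by (simp add: letter_inv_def)
  also have "... \<sim>\<sim> [] @ [gm i]" by (rule eqv_r[OF cancel1])
  finally show ?thesis by simp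
qed

fun nl :: "tletter \<Rightarrow> tletter" where
  "nl (R i, True) = rh i" | "nl (G i, True) = gm i" | "nl x = x"

lemma nl_eqv: "valid_gen n (fst x) \<Longrightarrow> [x] \<sim>\<sim> [nl x]"
  by (cases x rule: nl.cases) (auto intro: inv_rh inv_gm eqv_refl)

lemma nl_word: "valid_word n w \<Longrightarrow> w \<sim>\<sim> map nl w"
proof (induction w)
  case Nil then show ?case by (simp add: eqv_refl)
next
  case (Cons x w)
  then have "[x] @ w \<sim>\<sim> [nl x] @ map nl w"
    by (intro eqv_app nl_eqv) (auto simp: valid_word_def)
  then show ?case by simp
qed

lemma eqv_inv_nl: "u \<sim>\<sim> v \<Longrightarrow> valid_word n u \<Longrightarrow> valid_word n v \<Longrightarrow> map nl (invw u) \<sim>\<sim> map nl (invw v)"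
proof -
  assume a: "u \<sim>\<sim> v" "valid_word n u" "valid_word n v"
  have vi: "valid_word n (invw w)" if "valid_word n w" for w
    using that by (auto simp: valid_word_def invw_def letter_inv_def)
  have "map nl (invw u) \<sim>\<sim> invw u" by (rule eqv_sym, rule nl_word, rule vi, fact)
  also have "... \<sim>\<sim> invw v" by (rule eqv_invw, fact)
  also have "... \<sim>\<sim> map nl (invw v)" by (rule nl_word, rule vi, fact)
  finally show ?thesis .
qed

lemma R_gr_any: assumes "1 \<le> i" "i \<le> n - 1" "1 \<le> k" "k \<le> n"
  shows "[gm k, rh i] \<sim>\<sim> [rh i, gm (transpose i (i+1) k)]"
proof -
  consider "k = i" | "k = i + 1" | "k \<noteq> i" "k \<noteq> i + 1" by blast
  then show ?thesis
  proof cases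
    case 1
    have "[gm k, rh i] \<sim>\<sim> [rh i, rh i] @ [gm i, rh i]"
      using eqv_r[OF eqv_sym[OF R_rr[OF assms(1,2)]], of "[gm i, rh i]"] 1 by simp
    also have "... = [rh i] @ [rh i, gm i] @ [rh i]" by simp
    also have "... \<sim>\<sim> [rh i] @ [gm (i+1), rh i] @ [rh i]" by (rule eqv_ctx[OF R_rg[OF assms(1,2)]])
    also have "... = [rh i, gm (i+1)] @ [rh i, rh i]" by simp
    also have "... \<sim>\<sim> [rh i, gm (i+1)] @ []" by (rule eqv_l[OF R_rr[OF assms(1,2)]])
    finally show ?thesis using 1 by simp
  next
    case 2
    then show ?thesis using eqv_sym[OF R_rg[OF assms(1,2)]] by simp
  next
    case 3
    then show ?thesis using R_gr[OF assms(1,2,3,4)] by simp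
  qed
qed

abbreviation rw :: "nat list \<Rightarrow> tword" where "rw L \<equiv> map rh L"

definition vi :: "nat list \<Rightarrow> bool" where "vi L \<longleftrightarrow> (\<forall>k\<in>set L. 1 \<le> k \<and> k \<le> n - 1)"

lemma vi_simps[simp]: "vi []" "vi (x # L) \<longleftrightarrow> 1 \<le> x \<and> x \<le> n - 1 \<and> vi L"
  "vi (L1 @ L2) \<longleftrightarrow> vi L1 \<and> vi L2" "vi (rev L) \<longleftrightarrow> vi L"
  by (auto simp: vi_def)

lemma rw_cancel: "vi L \<Longrightarrow> rw L @ rw (rev L) \<sim>\<sim> []"
proof (induction L)
  case Nil then show ?case by (simp add: eqv_refl)
next
  case (Cons x L)
  have "rw (x # L) @ rw (rev (x # L)) = [rh x] @ (rw L @ rw (rev L)) @ [rh x]" by simp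
  also have "... \<sim>\<sim> [rh x] @ [] @ [rh x]" by (rule eqv_ctx) (use Cons in auto)
  also have "... \<sim>\<sim> []" using R_rr Cons.prems by simp
  finally show ?case .
qed

lemma rw_cancel2: "vi L \<Longrightarrow> rw (rev L) @ rw L \<sim>\<sim> []"
  using rw_cancel[of "rev L"] by simp

lemma comm_rw: "(\<And>k. k \<in> set L \<Longrightarrow> [x, rh k] \<sim>\<sim> [rh k, x]) \<Longrightarrow> [x] @ rw L \<sim>\<sim> rw L @ [x]"
proof (induction L)
  case Nil then show ?case by (simp add: eqv_refl)
next
  case (Cons k L)
  have "[x] @ rw (k # L) = [x, rh k] @ rw L" by simp
  also have "... \<sim>\<sim> [rh k, x] @ rw L" by (rule eqv_r) (use Cons in auto)
  also have "... = [rh k] @ ([x] @ rw L)" by simp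
  also have "... \<sim>\<sim> [rh k] @ (rw L @ [x])" by (rule eqv_l) (use Cons in auto)
  finally show ?case by simp
qed

lemma comm_rw': "(\<And>k. k \<in> set L \<Longrightarrow> [x, rh k] \<sim>\<sim> [rh k, x]) \<Longrightarrow> a @ [x] @ rw L @ b \<sim>\<sim> a @ rw L @ [x] @ b"
  using eqv_ctx[OF comm_rw, of L x a b] by simp

fun fs :: "nat list \<Rightarrow> nat \<Rightarrow> nat" where
  "fs [] k = k" | "fs (m # L) k = fs L (transpose m (m+1) k)"

lemma fs_append: "fs (L1 @ L2) k = fs L2 (fs L1 k)"
  by (induction L1 arbitrary: k) auto

lemma transpose_range: "1 \<le> m \<Longrightarrow> m \<le> n - 1 \<Longrightarrow> 1 \<le> k \<Longrightarrow> k \<le> n \<Longrightarrow>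
   1 \<le> transpose m (m+1) k \<and> transpose m (m+1) k \<le> n"
  by (auto simp: transpose_def)

lemma fs_range: "vi L \<Longrightarrow> 1 \<le> k \<Longrightarrow> k \<le> n \<Longrightarrow> 1 \<le> fs L k \<and> fs L k \<le> n"
proof (induction L arbitrary: k)
  case Nil then show ?case by simp
next
  case (Cons m L)
  then show ?case using transpose_range[of m k] by simp
qed

lemma gm_rw: "vi L \<Longrightarrow> 1 \<le> k \<Longrightarrow> k \<le> n \<Longrightarrow> [gm k] @ rw L \<sim>\<sim> rw L @ [gm (fs L k)]"
proof (induction L arbitrary: k)
  case Nil then show ?case by (simp add: eqv_refl)
next
  case (Cons m L)
  have r: "1 \<le> transpose m (m+1) k \<and> transpose m (m+1) k \<le> n"
    using transpose_range[of m k] Cons.prems by simp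
  have "[gm k] @ rw (m # L) = [gm k, rh m] @ rw L" by simp
  also have "... \<sim>\<sim> [rh m, gm (transpose m (m+1) k)] @ rw L"
    by (rule eqv_r, rule R_gr_any) (use Cons.prems in auto)
  also have "... = [rh m] @ ([gm (transpose m (m+1) k)] @ rw L)" by simp
  also have "... \<sim>\<sim> [rh m] @ (rw L @ [gm (fs L (transpose m (m+1) k))])"
    by (rule eqv_l, rule Cons.IH) (use Cons.prems r in auto)
  finally show ?case by simp
qed


lemma valid_app[simp]: "valid_word n (u @ v) \<longleftrightarrow> valid_word n u \<and> valid_word n v"
  by (auto simp: valid_word_def)
lemma valid_invw[simp]: "valid_word n (invw w) \<longleftrightarrow> valid_word n w"
  by (auto simp: valid_word_def invw_def letter_inv_def)
lemma valid_Cons[simp]: "valid_word n (x # w) \<longleftrightarrow> valid_gen n (fst x) \<and> valid_word n w"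
  by (auto simp: valid_word_def)
lemma valid_Nil[simp]: "valid_word n []"
  by (auto simp: valid_word_def)

lemma tcls_eq: "tcls n u = tcls n v \<longleftrightarrow> u \<sim>\<sim> v"
proof
  assume "tcls n u = tcls n v"
  moreover have "u \<in> tcls n u" by (simp add: tcls_def eqv_refl)
  ultimately show "u \<sim>\<sim> v" by (simp add: tcls_def)
next
  assume "u \<sim>\<sim> v" then show "tcls n u = tcls n v"
    by (auto simp: tcls_def intro: tvb_eqv.trans tvb_eqv.sym)
qed

lemma mult_tcls: "tcls n u \<otimes>\<^bsub>TVB n\<^esub> tcls n v = tcls n (u @ v)"
  by (auto simp: TVB_def tcls_def intro: tvb_eqv.trans eqv_app eqv_refl)

lemma one_TVB: "\<one>\<^bsub>TVB n\<^esub> = tcls n []" by (simp add: TVB_def)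

lemma carrier_TVB: "carrier (TVB n) = {tcls n w | w. valid_word n w}" by (simp add: TVB_def)

lemma tcls_carrier: "valid_word n w \<Longrightarrow> tcls n w \<in> carrier (TVB n)"
  by (auto simp: carrier_TVB)

lemma group_TVB: "group (TVB n)"
proof (rule groupI)
  fix x y assume "x \<in> carrier (TVB n)" "y \<in> carrier (TVB n)"
  then show "x \<otimes>\<^bsub>TVB n\<^esub> y \<in> carrier (TVB n)"
    by (auto simp: carrier_TVB mult_tcls)
next
  show "\<one>\<^bsub>TVB n\<^esub> \<in> carrier (TVB n)" by (auto simp: carrier_TVB one_TVB)
next
  fix x y z assume "x \<in> carrier (TVB n)" "y \<in> carrier (TVB n)" "z \<in> carrier (TVB n)"
  then show "x \<otimes>\<^bsub>TVB n\<^esub> y \<otimes>\<^bsub>TVB n\<^esub> z = x \<otimes>\<^bsub>TVB n\<^esub> (y \<otimes>\<^bsub>TVB n\<^esub> z)"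
    by (auto simp: carrier_TVB mult_tcls)
next
  fix x assume "x \<in> carrier (TVB n)"
  then show "\<one>\<^bsub>TVB n\<^esub> \<otimes>\<^bsub>TVB n\<^esub> x = x"
    by (auto simp: carrier_TVB mult_tcls one_TVB)
next
  fix x assume "x \<in> carrier (TVB n)"
  then obtain w where w: "x = tcls n w" "valid_word n w" by (auto simp: carrier_TVB)
  then show "\<exists>y\<in>carrier (TVB n). y \<otimes>\<^bsub>TVB n\<^esub> x = \<one>\<^bsub>TVB n\<^esub>"
    by (intro bexI[of _ "tcls n (invw w)"]) (auto simp: tcls_carrier mult_tcls one_TVB tcls_eq invw_cancel2)
qed

lemma inv_tcls: "valid_word n w \<Longrightarrow> inv\<^bsub>TVB n\<^esub> (tcls n w) = tcls n (invw w)"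
  by (rule group.inv_equality[OF group_TVB]) (auto simp: mult_tcls one_TVB tcls_eq invw_cancel2 tcls_carrier)

lemma perm_append: "perm_of_word (u @ v) = perm_of_word u \<circ> perm_of_word v"
  by (induction u rule: perm_of_word.induct) auto

lemma perm_eqv: "u \<sim>\<sim> v \<Longrightarrow> perm_of_word u = perm_of_word v"
proof (induction rule: tvb_eqv.induct)
  case (cong u v a b) then show ?case by (simp add: perm_append)
next
  case (cancel x)
  obtain g b where "x = (g, b)" by (cases x)
  then show ?case by (cases g) (auto simp: letter_inv_def fun_eq_iff transpose_def)
next
  case (rel l r)
  then show ?case unfolding tvb_rels_def
    by (auto simp: fun_eq_iff transpose_def)
qed auto

lemma phiP_tcls: "valid_word n w \<Longrightarrow> phiP n (tcls n w) = perm_of_word w"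
proof -
  assume v: "valid_word n w"
  have ex: "\<exists>u. u \<in> tcls n w \<and> valid_word n u" using v tvb_eqv.refl unfolding tcls_def by blast
  define u where "u = (SOME u. u \<in> tcls n w \<and> valid_word n u)"
  have "u \<in> tcls n w" using someI_ex[OF ex] u_def by simp
  then have "u \<sim>\<sim> w" by (simp add: tcls_def)
  then show ?thesis unfolding phiP_def u_def[symmetric] by (rule perm_eqv)
qed

lemma TVP_char: "x \<in> TVP n \<longleftrightarrow> (\<exists>w. x = tcls n w \<and> valid_word n w \<and> perm_of_word w = id)"
  by (auto simp: TVP_def kernel_def carrier_TVB phiP_tcls sym_group_def)

lemma TVP_tcls: "valid_word n w \<Longrightarrow> perm_of_word w = id \<Longrightarrow> tcls n w \<in> TVP n"
  using TVP_char by blast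

lemma TVP_sub: "TVP n \<subseteq> carrier (TVB n)"
  by (auto simp: TVP_char carrier_TVB)

lemma perm_invw_id: "perm_of_word w = id \<Longrightarrow> perm_of_word (invw w) = id"
proof -
  assume a: "perm_of_word w = id"
  have "perm_of_word (w @ invw w) = perm_of_word []" by (rule perm_eqv[OF invw_cancel])
  then show ?thesis using a by (simp add: perm_append)
qed

lemma subgroup_TVP: "subgroup (TVP n) (TVB n)"
proof (rule subgroup.intro)
  show "TVP n \<subseteq> carrier (TVB n)" by (rule TVP_sub)
next
  fix x y assume "x \<in> TVP n" "y \<in> TVP n"
  then show "x \<otimes>\<^bsub>TVB n\<^esub> y \<in> TVP n"
    by (auto simp: TVP_char mult_tcls perm_append)
next
  show "\<one>\<^bsub>TVB n\<^esub> \<in> TVP n" by (auto simp: TVP_char one_TVB)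
next
  fix x assume "x \<in> TVP n"
  then show "inv\<^bsub>TVB n\<^esub> x \<in> TVP n"
    by (auto simp: TVP_char inv_tcls perm_invw_id)
qed


end


context fixes n :: nat begin
abbreviation eqv2 (infix "\<sim>\<sim>" 50) where "u \<sim>\<sim> v \<equiv> tvb_eqv n u v"
lemma rcomm_far: "1 \<le> i \<Longrightarrow> i \<le> n - 1 \<Longrightarrow> (\<And>x. x \<in> set L \<Longrightarrow> 1 \<le> x \<and> x \<le> n - 1 \<and> (i + 2 \<le> x \<or> x + 2 \<le> i))
  \<Longrightarrow> [rh i] @ rw L \<sim>\<sim> rw L @ [rh i]"
proof (rule comm_rw)
  fix k assume "1 \<le> i" "i \<le> n - 1" "(\<And>x. x \<in> set L \<Longrightarrow> 1 \<le> x \<and> x \<le> n - 1 \<and> (i + 2 \<le> x \<or> x + 2 \<le> i))" "k \<in> set L"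
  then show "[rh i, rh k] \<sim>\<sim> [rh k, rh i]" by (intro R_rcomm) auto
qed

lemma rev_upt_snoc: "p < k \<Longrightarrow> rev [p..<k] = rev [Suc p..<k] @ [p]"
  by (simp add: upt_conv_Cons)

lemma coxeter_step:
  assumes "1 \<le> k" "k \<le> n" "\<forall>x\<in>set L. 1 \<le> x \<and> x \<le> k - 1"
  shows "\<exists>L0 p. (\<forall>x\<in>set L0. 1 \<le> x \<and> x \<le> k - 2) \<and> 1 \<le> p \<and> p \<le> k \<and> rw L \<sim>\<sim> rw L0 @ rw (rev [p..<k])"
  using assms(3)
proof (induction L rule: rev_induct)
  case Nil
  show ?case by (rule exI[of _ "[]"], rule exI[of _ k]) (use assms in \<open>auto simp: eqv_refl\<close>)
next
  case (snoc i L)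
  then obtain L0 p where L0: "\<forall>x\<in>set L0. 1 \<le> x \<and> x \<le> k - 2" "1 \<le> p" "p \<le> k"
      "rw L \<sim>\<sim> rw L0 @ rw (rev [p..<k])" by auto
  have i: "1 \<le> i" "i \<le> k - 1" using snoc.prems by auto
  have e0: "rw (L @ [i]) \<sim>\<sim> rw L0 @ rw (rev [p..<k]) @ [rh i]"
    using eqv_r[OF L0(4), of "[rh i]"] by simp
  consider "Suc i = p" | "i = p" | "i + 2 \<le> p" | "p < i" by linarith
  then show ?case
  proof cases
    case 1
    have "rev [i..<k] = rev [p..<k] @ [i]" using 1 i by (simp add: rev_upt_snoc)
    then have "rw (L @ [i]) \<sim>\<sim> rw L0 @ rw (rev [i..<k])" using e0 by simp
    then show ?thesis using L0 i by (intro exI[of _ L0] exI[of _ i]) auto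
  next
    case 2
    note e0
    also have "rw L0 @ rw (rev [p..<k]) @ [rh i] = (rw L0 @ rw (rev [Suc p..<k])) @ [rh i, rh i] @ []"
      using 2 i by (simp add: rev_upt_snoc)
    also have "... \<sim>\<sim> (rw L0 @ rw (rev [Suc p..<k])) @ [] @ []"
      by (rule eqv_ctx, rule R_rr) (use i assms in auto)
    finally have "rw (L @ [i]) \<sim>\<sim> rw L0 @ rw (rev [Suc p..<k])" by simp
    then show ?thesis using L0 i 2 by (intro exI[of _ L0] exI[of _ "Suc p"]) auto
  next
    case 3
    have c3: "rw L0 @ rw (rev [p..<k]) @ [rh i] \<sim>\<sim> rw L0 @ [rh i] @ rw (rev [p..<k])"
      by (rule eqv_l, rule eqv_sym, rule rcomm_far) (use i assms 3 in auto)
    have "rw (L @ [i]) \<sim>\<sim> rw (L0 @ [i]) @ rw (rev [p..<k])" using tvb_eqv.trans[OF e0 c3] by simp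
    then show ?thesis using L0 i 3 by (intro exI[of _ "L0 @ [i]"] exI[of _ p]) auto
  next
    case 4
    define A where "A = rw (rev [Suc i..<k])"
    define B where "B = rw (rev [p..<i - 1])"
    have split: "rev [p..<k] = rev [Suc i..<k] @ [i, i - 1] @ rev [p..<i - 1]"
    proof -
      have "[p..<k] = [p..<i-1] @ [i-1..<k]" using upt_add_eq_append[of p "i-1" "k-(i-1)"] 4 i by simp
      moreover have "[i-1..<k] = [i-1, i] @ [Suc i..<k]"
      proof -
        have a: "i - 1 < k" "i < k" "Suc (i - 1) = i" using 4 i by auto
        have "[i-1..<k] = (i-1) # [Suc (i-1)..<k]" using a(1) by (rule upt_conv_Cons)
        also have "... = (i-1) # i # [Suc i..<k]" using a(2,3) upt_conv_Cons by simp
        finally show ?thesis by simp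
      qed
      ultimately show ?thesis by simp
    qed
    note e0
    also have "rw L0 @ rw (rev [p..<k]) @ [rh i] = (rw L0 @ A @ [rh i, rh (i-1)]) @ (B @ [rh i]) @ []"
      by (simp add: split A_def B_def)
    also have "... \<sim>\<sim> (rw L0 @ A @ [rh i, rh (i-1)]) @ ([rh i] @ B) @ []"
      by (rule eqv_ctx, rule eqv_sym, unfold B_def, rule rcomm_far) (use i assms 4 L0 in auto)
    also have "... = (rw L0 @ A) @ [rh i, rh (i-1), rh i] @ B" by simp
    also have "... \<sim>\<sim> (rw L0 @ A) @ [rh (i-1), rh i, rh (i-1)] @ B"
    proof (rule eqv_ctx, rule eqv_sym)
      show "[rh (i-1), rh i, rh (i-1)] \<sim>\<sim> [rh i, rh (i-1), rh i]"
        using R_rbraid[of "i-1" n] i assms 4 L0 by simp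
    qed
    also have "... = rw L0 @ (A @ [rh (i-1)]) @ [rh i, rh (i-1)] @ B" by simp
    also have "... \<sim>\<sim> rw L0 @ ([rh (i-1)] @ A) @ [rh i, rh (i-1)] @ B"
      by (rule eqv_ctx, rule eqv_sym, unfold A_def, rule rcomm_far) (use i assms 4 L0 in auto)
    also have "... = rw (L0 @ [i-1]) @ rw (rev [p..<k])" by (simp add: split A_def B_def)
    finally have "rw (L @ [i]) \<sim>\<sim> rw (L0 @ [i-1]) @ rw (rev [p..<k])" .
    then show ?thesis using L0 i 4 by (intro exI[of _ "L0 @ [i-1]"] exI[of _ p]) auto
  qed
qed

lemma perm_c: "p \<le> k \<Longrightarrow> perm_of_word (rw (rev [p..<k])) p = k"
proof (induction k)
  case 0 then show ?case by simp
next
  case (Suc k)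
  show ?case
  proof (cases "p = Suc k")
    case True then show ?thesis by simp
  next
    case False
    then have "p \<le> k" using Suc by simp
    then show ?thesis using Suc by (simp add: transpose_def)
  qed
qed

lemma perm_low: "\<forall>x\<in>set L. x + 2 \<le> k \<Longrightarrow> perm_of_word (rw L) k = k"
  by (induction L) (auto simp: transpose_def)

lemma coxeter: "k \<le> n \<Longrightarrow> \<forall>x\<in>set L. 1 \<le> x \<and> x \<le> k - 1 \<Longrightarrow> perm_of_word (rw L) = id \<Longrightarrow> rw L \<sim>\<sim> []"
proof (induction k arbitrary: L)
  case 0
  then have "L = []" by (cases L) auto
  then show ?case by (simp add: eqv_refl)
next
  case (Suc k)
  obtain L0 p where L0: "\<forall>x\<in>set L0. 1 \<le> x \<and> x \<le> Suc k - 2" "1 \<le> p" "p \<le> Suc k"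
      "rw L \<sim>\<sim> rw L0 @ rw (rev [p..<Suc k])"
    using coxeter_step[of "Suc k" L] Suc.prems by auto
  have pe: "perm_of_word (rw L) = perm_of_word (rw L0) \<circ> perm_of_word (rw (rev [p..<Suc k]))"
    using perm_eqv[OF L0(4)] by (simp add: perm_append)
  have pl: "perm_of_word (rw L0) (Suc k) = Suc k"
    by (rule perm_low) (use L0(1) in auto)
  have "perm_of_word (rw L) p = perm_of_word (rw L0) (perm_of_word (rw (rev [p..<Suc k])) p)"
    using pe by simp
  also have "... = Suc k" using perm_c[OF L0(3)] pl by simp
  finally have "perm_of_word (rw L) p = Suc k" .
  then have pk: "p = Suc k" using Suc.prems by simp
  then have "rw L \<sim>\<sim> rw L0" using L0(4) by simp
  moreover have "perm_of_word (rw L0) = id"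
  proof -
    have "perm_of_word (rw L) = perm_of_word (rw L0)" using pe pk by simp
    then show ?thesis using Suc.prems(3) by metis
  qed
  moreover have "rw L0 \<sim>\<sim> []" by (rule Suc.IH) (use Suc.prems L0(1) calculation in auto)
  ultimately show ?case using tvb_eqv.trans by blast
qed

end


context fixes n :: nat begin
abbreviation eqv3 (infix "\<sim>\<sim>" 50) where "u \<sim>\<sim> v \<equiv> tvb_eqv n u v"

lemma comm_word: "(\<And>y. y \<in> set w \<Longrightarrow> [x, y] \<sim>\<sim> [y, x]) \<Longrightarrow> [x] @ w \<sim>\<sim> w @ [x]"
proof (induction w)
  case Nil then show ?case by (simp add: eqv_refl)
next
  case (Cons y w)
  have "[x] @ (y # w) = [x, y] @ w" by simp
  also have "... \<sim>\<sim> [y, x] @ w" by (rule eqv_r) (use Cons in auto)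
  also have "... = [y] @ ([x] @ w)" by simp
  also have "... \<sim>\<sim> [y] @ (w @ [x])" by (rule eqv_l) (use Cons in auto)
  finally show ?case by simp
qed

lemma sinv_rh: "1 \<le> i \<Longrightarrow> i \<le> n - 1 \<Longrightarrow> 1 \<le> m \<Longrightarrow> m \<le> n - 1 \<Longrightarrow> i + 2 \<le> m \<or> m + 2 \<le> i
  \<Longrightarrow> [rh m, sgi i] \<sim>\<sim> [sgi i, rh m]"
proof -
  assume a: "1 \<le> i" "i \<le> n - 1" "1 \<le> m" "m \<le> n - 1" "i + 2 \<le> m \<or> m + 2 \<le> i"
  have "[sg i, rh m] \<sim>\<sim> [rh m, sg i]" by (rule R_srcomm) (use a in auto)
  from comm_inv[OF this] have "[sgi i, rh m] \<sim>\<sim> [rh m, sgi i]" by (simp add: letter_inv_def)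
  then show ?thesis by (rule eqv_sym)
qed

lemma sinv_gm: "1 \<le> i \<Longrightarrow> i \<le> n - 1 \<Longrightarrow> 1 \<le> j \<Longrightarrow> j \<le> n \<Longrightarrow> j \<noteq> i \<Longrightarrow> j \<noteq> i + 1
  \<Longrightarrow> [gm j, sgi i] \<sim>\<sim> [sgi i, gm j]"
proof -
  assume a: "1 \<le> i" "i \<le> n - 1" "1 \<le> j" "j \<le> n" "j \<noteq> i" "j \<noteq> i + 1"
  have "[sg i, gm j] \<sim>\<sim> [gm j, sg i]" by (rule eqv_sym, rule R_gs) (use a in auto)
  from comm_inv[OF this] have "[sgi i, gm j] \<sim>\<sim> [gm j, sgi i]" by (simp add: letter_inv_def)
  then show ?thesis by (rule eqv_sym)
qed

lemma Inv_mixed: assumes "1 \<le> a" "a \<le> n - 2" shows "[sgi a, rh (a+1), rh a] \<sim>\<sim> [rh (a+1), rh a, sgi (a+1)]"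
proof -
  have "map nl (invw [rh a, rh (a+1), sg a]) \<sim>\<sim> map nl (invw [sg (a+1), rh a, rh (a+1)])"
    by (rule eqv_inv_nl, rule R_mixed) (use assms in auto)
  then show ?thesis by (simp add: letter_inv_def)
qed

lemma Inv_rsr: assumes "1 \<le> i" "i \<le> n - 1" shows "[rh i, sgi i, rh i] \<sim>\<sim> [gm (i+1), gm i, sgi i, gm i, gm (i+1)]"
proof -
  have "map nl (invw [rh i, sg i, rh i]) \<sim>\<sim> map nl (invw [gm (i+1), gm i, sg i, gm i, gm (i+1)])"
    by (rule eqv_inv_nl, rule R_rsr) (use assms in auto)
  then show ?thesis by (simp add: letter_inv_def)
qed

lemma S1: assumes "1 \<le> a" "a \<le> n - 2" shows "[sgi (a+1)] \<sim>\<sim> [rh a, rh (a+1), sgi a, rh (a+1), rh a]"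
proof -
  have "[sgi (a+1)] \<sim>\<sim> [rh a, rh a] @ [sgi (a+1)]"
    using eqv_r[OF eqv_sym[OF R_rr[of a n]], of "[sgi (a+1)]"] assms by simp
  also have "... = [rh a] @ [] @ [rh a, sgi (a+1)]" by simp
  also have "... \<sim>\<sim> [rh a] @ [rh (a+1), rh (a+1)] @ [rh a, sgi (a+1)]"
    by (rule eqv_ctx, rule eqv_sym, rule R_rr) (use assms in auto)
  also have "... = [rh a, rh (a+1)] @ [rh (a+1), rh a, sgi (a+1)] @ []" by simp
  also have "... \<sim>\<sim> [rh a, rh (a+1)] @ [sgi a, rh (a+1), rh a] @ []"
    by (rule eqv_ctx, rule eqv_sym, rule Inv_mixed) (use assms in auto)
  finally show ?thesis by simp
qed

lemma K2: assumes "1 \<le> i" "i \<le> n - 2"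
  shows "[rh i, rh (i+1), rh i, sgi i, rh (i+1), rh i] \<sim>\<sim> [rh (i+1), sgi (i+1)]"
proof -
  have "[rh (i+1), sgi (i+1)] = [rh (i+1)] @ [sgi (i+1)] @ []" by simp
  also have "... \<sim>\<sim> [rh (i+1)] @ [rh i, rh (i+1), sgi i, rh (i+1), rh i] @ []"
    by (rule eqv_ctx, rule S1) (use assms in auto)
  also have "... = [] @ [rh (i+1), rh i, rh (i+1)] @ [sgi i, rh (i+1), rh i]" by simp
  also have "... \<sim>\<sim> [] @ [rh i, rh (i+1), rh i] @ [sgi i, rh (i+1), rh i]"
    by (rule eqv_ctx, rule eqv_sym, rule R_rbraid) (use assms in auto)
  finally have "[rh (i+1), sgi (i+1)] \<sim>\<sim> [rh i, rh (i+1), rh i, sgi i, rh (i+1), rh i]" by simp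
  then show ?thesis by (rule eqv_sym)
qed

lemma K1: assumes "1 \<le> a" "a \<le> n - 2"
  shows "[rh a, rh (a+1), sgi (a+1), rh a] \<sim>\<sim> [rh (a+1), rh a, sgi a, rh (a+1)]"
proof -
  have "[rh a, rh (a+1), sgi (a+1), rh a] = [rh a, rh (a+1)] @ [sgi (a+1)] @ [rh a]" by simp
  also have "... \<sim>\<sim> [rh a, rh (a+1)] @ [rh a, rh (a+1), sgi a, rh (a+1), rh a] @ [rh a]"
    by (rule eqv_ctx, rule S1) (use assms in auto)
  also have "... = [rh a, rh (a+1), rh a, rh (a+1), sgi a, rh (a+1)] @ [rh a, rh a] @ []" by simp
  also have "... \<sim>\<sim> [rh a, rh (a+1), rh a, rh (a+1), sgi a, rh (a+1)] @ [] @ []"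
    by (rule eqv_ctx, rule R_rr) (use assms in auto)
  also have "... = [] @ [rh a, rh (a+1), rh a] @ [rh (a+1), sgi a, rh (a+1)]" by simp
  also have "... \<sim>\<sim> [] @ [rh (a+1), rh a, rh (a+1)] @ [rh (a+1), sgi a, rh (a+1)]"
    by (rule eqv_ctx, rule R_rbraid) (use assms in auto)
  also have "... = [rh (a+1), rh a] @ [rh (a+1), rh (a+1)] @ [sgi a, rh (a+1)]" by simp
  also have "... \<sim>\<sim> [rh (a+1), rh a] @ [] @ [sgi a, rh (a+1)]"
    by (rule eqv_ctx, rule R_rr) (use assms in auto)
  finally show ?thesis by simp
qed

lemma K3: assumes "1 \<le> i" "i \<le> n - 1"
  shows "[rh i, rh i, sgi i, rh i] \<sim>\<sim> [gm (i+1), gm i, rh i, sgi i, gm i, gm (i+1)]"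
proof -
  have "[rh i, rh i, sgi i, rh i] = [rh i] @ [rh i, sgi i, rh i] @ []" by simp
  also have "... \<sim>\<sim> [rh i] @ [gm (i+1), gm i, sgi i, gm i, gm (i+1)] @ []"
    by (rule eqv_ctx, rule Inv_rsr) (use assms in auto)
  also have "... = [] @ [rh i, gm (i+1)] @ [gm i, sgi i, gm i, gm (i+1)]" by simp
  also have "... \<sim>\<sim> [] @ [gm i, rh i] @ [gm i, sgi i, gm i, gm (i+1)]"
  proof (rule eqv_ctx, rule eqv_sym)
    show "[gm i, rh i] \<sim>\<sim> [rh i, gm (i+1)]" using R_gr_any[of i n i] assms by simp
  qed
  also have "... = [gm i] @ [rh i, gm i] @ [sgi i, gm i, gm (i+1)]" by simp
  also have "... \<sim>\<sim> [gm i] @ [gm (i+1), rh i] @ [sgi i, gm i, gm (i+1)]"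
    by (rule eqv_ctx, rule R_rg) (use assms in auto)
  also have "... = [] @ [gm i, gm (i+1)] @ [rh i, sgi i, gm i, gm (i+1)]" by simp
  also have "... \<sim>\<sim> [] @ [gm (i+1), gm i] @ [rh i, sgi i, gm i, gm (i+1)]"
    by (rule eqv_ctx, rule R_gcomm) (use assms in auto)
  finally show ?thesis by simp
qed


lemma lam_lt: "i < j \<Longrightarrow> lam_word i j = rw (rev [Suc i..<j]) @ [rh i, sgi i] @ rw [Suc i..<j]"
  by (simp add: lam_word_def)

lemma rh_far_rw: assumes "1 \<le> m" "m \<le> n - 1" "\<And>x. x \<in> set L \<Longrightarrow> 1 \<le> x \<and> x \<le> n - 1 \<and> (m + 2 \<le> x \<or> x + 2 \<le> m)"
  shows "[rh m] @ rw L \<sim>\<sim> rw L @ [rh m]"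
proof (rule comm_word)
  fix y assume "y \<in> set (rw L)"
  then obtain x where x: "x \<in> set L" "y = rh x" by auto
  show "[rh m, y] \<sim>\<sim> [y, rh m]" using x assms(3)[OF x(1)] assms(1,2) by (auto intro: R_rcomm)
qed

lemma shift1: assumes "1 \<le> a" "a \<le> m" "m + 2 \<le> b" "b \<le> n"
  shows "[rh m] @ rw (rev [a..<b]) \<sim>\<sim> rw (rev [a..<b]) @ [rh (m+1)]"
proof -
  define A where "A = rw (rev [m+2..<b])"
  define B where "B = rw (rev [a..<m])"
  have split: "rev [a..<b] = rev [m+2..<b] @ [m+1, m] @ rev [a..<m]"
  proof -
    have "[a..<b] = [a..<m] @ [m..<b]" using upt_add_eq_append[of a m "b - m"] assms by simp
    moreover have "[m..<b] = [m, m+1] @ [m+2..<b]" using assms by (simp add: upt_conv_Cons)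
    ultimately show ?thesis by simp
  qed
  have "[rh m] @ rw (rev [a..<b]) = [] @ ([rh m] @ A) @ [rh (m+1), rh m] @ B" by (simp add: split A_def B_def)
  also have "... \<sim>\<sim> [] @ (A @ [rh m]) @ [rh (m+1), rh m] @ B"
    by (rule eqv_ctx, unfold A_def, rule rh_far_rw) (use assms in auto)
  also have "... = A @ [rh m, rh (m+1), rh m] @ B" by simp
  also have "... \<sim>\<sim> A @ [rh (m+1), rh m, rh (m+1)] @ B"
    by (rule eqv_ctx, rule R_rbraid) (use assms in auto)
  also have "... = (A @ [rh (m+1), rh m]) @ ([rh (m+1)] @ B) @ []" by simp
  also have "... \<sim>\<sim> (A @ [rh (m+1), rh m]) @ (B @ [rh (m+1)]) @ []"
    by (rule eqv_ctx, unfold B_def, rule rh_far_rw) (use assms in auto)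
  also have "... = rw (rev [a..<b]) @ [rh (m+1)]" by (simp add: split A_def B_def)
  finally show ?thesis .
qed

lemma vi_upt: "1 \<le> a \<Longrightarrow> b \<le> n \<Longrightarrow> vi n [a..<b]"
  by (auto simp: vi_def)

lemma shift2: assumes "1 \<le> a" "a \<le> m" "m + 2 \<le> b" "b \<le> n"
  shows "rw [a..<b] @ [rh m] \<sim>\<sim> [rh (m+1)] @ rw [a..<b]"
proof -
  define P where "P = rw (rev [a..<b])"
  define Q where "Q = rw [a..<b]"
  have v: "vi n [a..<b]" using assms by (intro vi_upt) auto
  have "[rh (m+1)] @ Q \<sim>\<sim> [] @ [] @ ([rh (m+1)] @ Q)" by (simp add: eqv_refl)
  also have "... \<sim>\<sim> [] @ (Q @ P) @ ([rh (m+1)] @ Q)"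
    by (rule eqv_ctx, rule eqv_sym, unfold P_def Q_def, rule rw_cancel[OF v])
  also have "... = Q @ (P @ [rh (m+1)]) @ Q" by simp
  also have "... \<sim>\<sim> Q @ ([rh m] @ P) @ Q"
    by (rule eqv_ctx, rule eqv_sym, unfold P_def, rule shift1) (use assms in auto)
  also have "... = (Q @ [rh m]) @ (P @ Q) @ []" by simp
  also have "... \<sim>\<sim> (Q @ [rh m]) @ [] @ []"
    by (rule eqv_ctx, unfold P_def Q_def, rule rw_cancel2[OF v])
  finally show ?thesis by (simp add: Q_def eqv_sym)
qed


lemma cancel_rh_end: "1 \<le> m \<Longrightarrow> m \<le> n - 1 \<Longrightarrow> w @ [rh m, rh m] \<sim>\<sim> w"
  using eqv_l[OF R_rr[of m n], of w] by simp

lemma F3w: assumes m: "1 \<le> m" "m \<le> n - 1" and ij: "1 \<le> i" "i < j" "j \<le> n"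
  shows "(\<exists>a b. 1 \<le> a \<and> a < b \<and> b \<le> n \<and> [rh m] @ lam_word i j @ [rh m] \<sim>\<sim> lam_word a b)
       \<or> (j = Suc i \<and> m = i \<and> [rh m] @ lam_word i j @ [rh m] \<sim>\<sim> [gm (i+1), gm i, rh i, sgi i, gm i, gm (i+1)])"
proof -
  define P where "P = rw (rev [Suc i..<j])"
  define Q where "Q = rw [Suc i..<j]"
  have lam: "lam_word i j = P @ [rh i, sgi i] @ Q" using ij by (simp add: lam_lt P_def Q_def)
  consider "m + 2 \<le> i \<or> j + 1 \<le> m" | "m + 1 = i" | "m = i" "j = Suc i" | "m = i" "j \<ge> i + 2"
    | "i + 1 \<le> m" "m + 2 \<le> j" | "m + 1 = j" "i < m" | "m = j" by linarith
  then show ?thesis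
  proof cases
    case 1
    have "[rh m] @ lam_word i j @ [rh m] = ([rh m] @ lam_word i j) @ [rh m]" by simp
    also have "... \<sim>\<sim> (lam_word i j @ [rh m]) @ [rh m]"
    proof (rule eqv_r, rule comm_word)
      fix y assume "y \<in> set (lam_word i j)"
      then have "y = sgi i \<or> (\<exists>k. y = rh k \<and> i \<le> k \<and> k < j)" using ij by (auto simp: lam)
        (simp_all add: P_def Q_def, auto)
      then show "[rh m, y] \<sim>\<sim> [y, rh m]"
      proof
        assume "y = sgi i" then show ?thesis using 1 m ij by (auto intro: sinv_rh)
      next
        assume "\<exists>k. y = rh k \<and> i \<le> k \<and> k < j"
        then obtain k where "y = rh k" "i \<le> k" "k < j" by blast
        then show ?thesis using 1 m ij by (auto intro!: R_rcomm)
      qed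
    qed
    also have "... \<sim>\<sim> lam_word i j" using cancel_rh_end[OF m] by simp
    finally show ?thesis using ij by blast
  next
    case 2
    have i2: "2 \<le> i" using 2 m by simp
    have "[rh m] @ lam_word i j @ [rh m] = ([rh m] @ P) @ [rh i, sgi i] @ Q @ [rh m]" by (simp add: lam)
    also have "... \<sim>\<sim> (P @ [rh m]) @ [rh i, sgi i] @ Q @ [rh m]"
      by (rule eqv_r, unfold P_def, rule rh_far_rw) (use m 2 ij in auto)
    also have "... = (P @ [rh m, rh i, sgi i]) @ (Q @ [rh m]) @ []" by simp
    also have "... \<sim>\<sim> (P @ [rh m, rh i, sgi i]) @ ([rh m] @ Q) @ []"
      by (rule eqv_ctx, rule eqv_sym, unfold Q_def, rule rh_far_rw) (use m 2 ij in auto)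
    also have "... = P @ [rh m, rh (m+1), sgi (m+1), rh m] @ Q" using 2 by simp
    also have "... \<sim>\<sim> P @ [rh (m+1), rh m, sgi m, rh (m+1)] @ Q"
      by (rule eqv_ctx, rule K1) (use m 2 ij in auto)
    also have "... = lam_word m j"
    proof -
      have "rev [i..<j] = rev [Suc i..<j] @ [i]" "[i..<j] = i # [Suc i..<j]" using 2 ij
        by (simp_all add: upt_conv_Cons)
      then show ?thesis using 2 ij by (simp add: lam_lt P_def Q_def)
    qed
    finally show ?thesis using 2 ij m by (intro disjI1 exI[of _ m] exI[of _ j]) auto
  next
    case 3
    have "[rh m] @ lam_word i j @ [rh m] = [rh i, rh i, sgi i, rh i]" using 3 by (simp add: lam_word_def)
    also have "... \<sim>\<sim> [gm (i+1), gm i, rh i, sgi i, gm i, gm (i+1)]" by (rule K3) (use m 3 in auto)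
    finally show ?thesis using 3 by blast
  next
    case 4
    define P' where "P' = rw (rev [Suc (Suc i)..<j])"
    define Q' where "Q' = rw [Suc (Suc i)..<j]"
    have PQ: "P = P' @ [rh (i+1)]" "Q = [rh (i+1)] @ Q'" using 4
      by (simp_all add: P_def P'_def Q_def Q'_def upt_conv_Cons)
    have "[rh m] @ lam_word i j @ [rh m] = ([rh i] @ P') @ [rh (i+1), rh i, sgi i, rh (i+1)] @ Q' @ [rh i]"
      using 4 by (simp add: lam PQ)
    also have "... \<sim>\<sim> (P' @ [rh i]) @ [rh (i+1), rh i, sgi i, rh (i+1)] @ Q' @ [rh i]"
      by (rule eqv_r, unfold P'_def, rule rh_far_rw) (use m 4 ij in auto)
    also have "... = (P' @ [rh i, rh (i+1), rh i, sgi i, rh (i+1)]) @ (Q' @ [rh i]) @ []" by simp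
    also have "... \<sim>\<sim> (P' @ [rh i, rh (i+1), rh i, sgi i, rh (i+1)]) @ ([rh i] @ Q') @ []"
      by (rule eqv_ctx, rule eqv_sym, unfold Q'_def, rule rh_far_rw) (use m 4 ij in auto)
    also have "... = P' @ [rh i, rh (i+1), rh i, sgi i, rh (i+1), rh i] @ Q'" by simp
    also have "... \<sim>\<sim> P' @ [rh (i+1), sgi (i+1)] @ Q'"
      by (rule eqv_ctx, rule K2) (use m 4 ij in auto)
    also have "... = lam_word (i+1) j" using 4 by (simp add: lam_lt P'_def Q'_def)
    finally show ?thesis using 4 ij m by (intro disjI1 exI[of _ "i+1"] exI[of _ j]) auto
  next
    case 5
    have "[rh m] @ lam_word i j @ [rh m] = ([rh m] @ P) @ [rh i, sgi i] @ Q @ [rh m]" by (simp add: lam)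
    also have "... \<sim>\<sim> (P @ [rh (m+1)]) @ [rh i, sgi i] @ Q @ [rh m]"
      by (rule eqv_r, unfold P_def, rule shift1) (use m 5 ij in auto)
    also have "... = (P @ [rh (m+1), rh i, sgi i]) @ (Q @ [rh m]) @ []" by simp
    also have "... \<sim>\<sim> (P @ [rh (m+1), rh i, sgi i]) @ ([rh (m+1)] @ Q) @ []"
      by (rule eqv_ctx, unfold Q_def, rule shift2) (use m 5 ij in auto)
    also have "... = P @ ([rh (m+1)] @ [rh i, sgi i]) @ [rh (m+1)] @ Q" by simp
    also have "... \<sim>\<sim> P @ ([rh i, sgi i] @ [rh (m+1)]) @ [rh (m+1)] @ Q"
    proof (rule eqv_ctx, rule comm_word)
      fix y assume "y \<in> set [rh i, sgi i]"
      then show "[rh (m+1), y] \<sim>\<sim> [y, rh (m+1)]" using m 5 ij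
        by (auto intro: sinv_rh R_rcomm)
    qed
    also have "... = (P @ [rh i, sgi i]) @ [rh (m+1), rh (m+1)] @ Q" by simp
    also have "... \<sim>\<sim> (P @ [rh i, sgi i]) @ [] @ Q"
      by (rule eqv_ctx, rule R_rr) (use m 5 ij in auto)
    also have "... = lam_word i j" by (simp add: lam)
    finally show ?thesis using ij by blast
  next
    case 6
    have "rev [Suc i..<j] = m # rev [Suc i..<m]" "[Suc i..<j] = [Suc i..<m] @ [m]" using 6
      by (simp_all add: upt_Suc_append[symmetric])
    then have "[rh m] @ lam_word i j @ [rh m] = [rh m, rh m] @ lam_word i m @ [rh m, rh m]"
      using 6 ij by (simp add: lam_lt)
    also have "... \<sim>\<sim> [] @ lam_word i m @ []"
      by (rule eqv_app[OF _ eqv_app[OF eqv_refl]]; rule R_rr) (use m in auto)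
    finally show ?thesis using 6 ij by (intro disjI1 exI[of _ i] exI[of _ m]) auto
  next
    case 7
    have "rev [Suc i..<Suc j] = j # rev [Suc i..<j]" "[Suc i..<Suc j] = [Suc i..<j] @ [j]" using ij
      by simp_all
    then have "[rh m] @ lam_word i j @ [rh m] = lam_word i (Suc j)" using 7 ij by (simp add: lam_lt)
    then have "[rh m] @ lam_word i j @ [rh m] \<sim>\<sim> lam_word i (Suc j)" by (simp add: eqv_refl)
    then show ?thesis using 7 ij m by (intro disjI1 exI[of _ i] exI[of _ "Suc j"]) auto
  qed
qed


lemma fs_rev_cancel: "fs (rev L @ L) k = k"
proof (induction L arbitrary: k)
  case Nil then show ?case by simp
next
  case (Cons x L)
  have "fs (rev (x # L) @ (x # L)) k = fs L (fs [x] (fs [x] (fs (rev L) k)))"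
    by (simp add: fs_append)
  also have "... = fs L (fs (rev L) k)" by (simp add: transpose_def)
  also have "... = k" using Cons by (simp add: fs_append)
  finally show ?case .
qed

lemma fs_upt_low: "x < a \<Longrightarrow> fs [a..<b] x = x"
  by (induction b) (auto simp: fs_append transpose_def)

lemma fs_upt_first: "a \<le> b \<Longrightarrow> fs [a..<b] a = b"
proof (induction b)
  case 0 then show ?case by simp
next
  case (Suc b)
  show ?case
  proof (cases "a = Suc b")
    case True then show ?thesis by simp
  next
    case False then show ?thesis using Suc by (simp add: fs_append)
  qed
qed

lemma F2w: assumes k: "1 \<le> k" "k \<le> n" "k \<noteq> i" "k \<noteq> j" and ij: "1 \<le> i" "i < j" "j \<le> n"
  shows "[gm k] @ lam_word i j \<sim>\<sim> lam_word i j @ [gm k]"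
proof -
  define L where "L = [Suc i..<j]"
  define k' where "k' = fs (rev L) k"
  have v: "vi n L" "vi n (rev L)" using ij by (auto simp: vi_def L_def)
  have bk: "fs L k' = k" using fs_rev_cancel[of L k] by (simp add: k'_def fs_append)
  have k'r: "1 \<le> k'" "k' \<le> n" using fs_range[OF v(2) k(1,2)] by (auto simp: k'_def)
  have k'i: "k' \<noteq> i"
  proof
    assume "k' = i"
    then have "k = fs L i" using bk by simp
    also have "... = i" unfolding L_def by (rule fs_upt_low) simp
    finally show False using k by simp
  qed
  have k'i1: "k' \<noteq> i + 1"
  proof
    assume "k' = i + 1"
    then have "k = fs L (Suc i)" using bk by simp
    also have "... = j" unfolding L_def by (rule fs_upt_first) (use ij in simp)
    finally show False using k by simp
  qed
  have "[gm k] @ lam_word i j = ([gm k] @ rw (rev L)) @ [rh i, sgi i] @ rw L"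
    using ij by (simp add: lam_lt L_def)
  also have "... \<sim>\<sim> (rw (rev L) @ [gm k']) @ [rh i, sgi i] @ rw L"
    unfolding k'_def by (rule eqv_r, rule gm_rw) (use v k in auto)
  also have "... = rw (rev L) @ ([gm k'] @ [rh i, sgi i]) @ rw L" by simp
  also have "... \<sim>\<sim> rw (rev L) @ ([rh i, sgi i] @ [gm k']) @ rw L"
  proof (rule eqv_ctx, rule comm_word)
    fix y assume "y \<in> set [rh i, sgi i]"
    then show "[gm k', y] \<sim>\<sim> [y, gm k']" using k'r k'i k'i1 ij
      by (auto intro: sinv_gm R_gr)
  qed
  also have "... = (rw (rev L) @ [rh i, sgi i]) @ ([gm k'] @ rw L) @ []" by simp
  also have "... \<sim>\<sim> (rw (rev L) @ [rh i, sgi i]) @ (rw L @ [gm (fs L k')]) @ []"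
    by (rule eqv_ctx, rule gm_rw) (use v k'r in auto)
  also have "... = lam_word i j @ [gm k]" using ij bk by (simp add: lam_lt L_def)
  finally show ?thesis .
qed

end



lemma (in group) conj_gen:
  assumes a: "a \<in> carrier G" "a \<otimes> a = \<one>" and S: "SS \<subseteq> carrier G" and H: "subgroup H G"
    and gen: "\<And>h. h \<in> SS \<Longrightarrow> a \<otimes> h \<otimes> a \<in> H" and x: "x \<in> generate G SS"
  shows "a \<otimes> x \<otimes> a \<in> H"
  using x
proof induction
  case one
  then show ?case using a subgroup.one_closed[OF H] by simp
next
  case (incl h) then show ?case by (rule gen)
next
  case (inv h)
  have hc: "h \<in> carrier G" using inv S by auto
  have ia: "inv a = a" using a by (intro inv_equality) auto
  have "inv (a \<otimes> h \<otimes> a) = a \<otimes> inv h \<otimes> a"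
    using hc a ia by (simp add: inv_mult_group m_assoc)
  moreover have "inv (a \<otimes> h \<otimes> a) \<in> H" using subgroup.m_inv_closed[OF H gen[OF inv]] .
  ultimately show ?case by simp
next
  case (eng x y)
  have xc: "x \<in> carrier G" "y \<in> carrier G" using eng generate_in_carrier[OF S] by auto
  have aa: "a \<otimes> (a \<otimes> z) = z" if "z \<in> carrier G" for z
    using a that by (simp add: m_assoc[symmetric])
  have "a \<otimes> (x \<otimes> y) \<otimes> a = (a \<otimes> x \<otimes> a) \<otimes> (a \<otimes> y \<otimes> a)"
    using xc a by (simp add: m_assoc aa)
  then show ?case using subgroup.m_closed[OF H eng.IH] by simp
qed

context fixes n :: nat begin
abbreviation eqv4 (infix "\<sim>\<sim>" 50) where "u \<sim>\<sim> v \<equiv> tvb_eqv n u v"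
abbreviation cl where "cl w \<equiv> tcls n w"
abbreviation GG where "GG \<equiv> TVB n"

definition cw :: "tword \<Rightarrow> tword \<Rightarrow> tword" where "cw a c = invw c @ a @ c"

lemma cw_cong: "a \<sim>\<sim> a' \<Longrightarrow> c \<sim>\<sim> c' \<Longrightarrow> cw a c \<sim>\<sim> cw a' c'"
  unfolding cw_def by (intro eqv_app eqv_invw) auto

lemma cw_cw: "cw (cw a b) c = cw a (b @ c)"
  by (simp add: cw_def)

lemma cl_cw: "valid_word n c \<Longrightarrow> cl (cw a c) = inv\<^bsub>GG\<^esub> (cl c) \<otimes>\<^bsub>GG\<^esub> cl a \<otimes>\<^bsub>GG\<^esub> cl c"
  by (simp add: cw_def inv_tcls mult_tcls)

definition plw :: "nat \<Rightarrow> nat \<Rightarrow> tword \<Rightarrow> tword" where "plw i j b = cw (lam_word i j) b"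

definition Bs :: "nat \<Rightarrow> nat \<Rightarrow> tword set" where "Bs i j = {[], [gm i], [gm j], [gm i, gm j]}"

lemma PL_gens_char: "PL_gens n = {cl (plw i j b) | i j b. 1 \<le> i \<and> i < j \<and> j \<le> n \<and> b \<in> Bs i j}"
proof -
  have e: "lambda n i j = cl (plw i j [])"
    "tconj n (lambda n i j) (gamma n i) = cl (plw i j [gm i])"
    "tconj n (lambda n i j) (gamma n j) = cl (plw i j [gm j])"
    "tconj n (lambda n i j) (gamma n i \<otimes>\<^bsub>TVB n\<^esub> gamma n j) = cl (plw i j [gm i, gm j])"
    if "1 \<le> i" "i \<le> n" "1 \<le> j" "j \<le> n" for i j
    using that by (simp_all add: lambda_def plw_def cw_def tconj_def gamma_def mult_tcls inv_tcls)
  define R where "R = {cl (plw i j b) | i j b. 1 \<le> i \<and> i < j \<and> j \<le> n \<and> b \<in> Bs i j}"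
  have inR: "cl (plw i j b) \<in> R" if "1 \<le> i" "i < j" "j \<le> n" "b \<in> Bs i j" for i j b
    using that unfolding R_def by blast
  have "PL_gens n \<subseteq> R"
  proof
    fix x assume "x \<in> PL_gens n"
    then obtain i j where ij: "1 \<le> i" "i \<le> n" "i < j" "j \<le> n" and
      x: "x = lambda n i j \<or> x = tconj n (lambda n i j) (gamma n i) \<or> x = tconj n (lambda n i j) (gamma n j)
         \<or> x = tconj n (lambda n i j) (gamma n i \<otimes>\<^bsub>TVB n\<^esub> gamma n j)"
      unfolding PL_gens_def by auto
    have ij': "1 \<le> i" "i \<le> n" "1 \<le> j" "j \<le> n" using ij by auto
    from x show "x \<in> R"
    proof (elim disjE)
      assume "x = lambda n i j" then show ?thesis using inR[of i j "[]"] e(1)[OF ij'] ij by (simp add: Bs_def)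
    next
      assume "x = tconj n (lambda n i j) (gamma n i)" then show ?thesis using inR[of i j "[gm i]"] e(2)[OF ij'] ij by (simp add: Bs_def)
    next
      assume "x = tconj n (lambda n i j) (gamma n j)" then show ?thesis using inR[of i j "[gm j]"] e(3)[OF ij'] ij by (simp add: Bs_def)
    next
      assume "x = tconj n (lambda n i j) (gamma n i \<otimes>\<^bsub>TVB n\<^esub> gamma n j)"
      then show ?thesis using inR[of i j "[gm i, gm j]"] e(4)[OF ij'] ij by (simp add: Bs_def)
    qed
  qed
  moreover have "R \<subseteq> PL_gens n"
  proof
    fix x assume "x \<in> R"
    then obtain i j b where ij: "1 \<le> i" "i < j" "j \<le> n" "b \<in> Bs i j" and x: "x = cl (plw i j b)"
      unfolding R_def by blast
    have ij': "1 \<le> i" "i \<le> n" "1 \<le> j" "j \<le> n" using ij by auto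
    have mem: "{lambda n i j, tconj n (lambda n i j) (gamma n i), tconj n (lambda n i j) (gamma n j),
         tconj n (lambda n i j) (gamma n i \<otimes>\<^bsub>TVB n\<^esub> gamma n j)} \<subseteq> PL_gens n"
      unfolding PL_gens_def using ij by (intro subsetI UN_I[of i] UN_I[of j]) auto
    show "x \<in> PL_gens n" using ij(4) mem e[OF ij'] unfolding x Bs_def by auto
  qed
  ultimately show ?thesis unfolding R_def by blast
qed


lemma valid_lam: "1 \<le> i \<Longrightarrow> i < j \<Longrightarrow> j \<le> n \<Longrightarrow> valid_word n (lam_word i j)"
  by (auto simp: lam_lt valid_word_def)

lemma gg3: "1 \<le> a \<Longrightarrow> a \<le> n \<Longrightarrow> 1 \<le> c \<Longrightarrow> c \<le> n \<Longrightarrow> [gm a, gm c, gm a] \<sim>\<sim> [gm c]"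
proof -
  assume a: "1 \<le> a" "a \<le> n" "1 \<le> c" "c \<le> n"
  have "[gm a, gm c, gm a] = [gm a] @ [gm c, gm a] @ []" by simp
  also have "... \<sim>\<sim> [gm a] @ [gm a, gm c] @ []" by (rule eqv_ctx, rule R_gcomm) (use a in auto)
  also have "... = [] @ [gm a, gm a] @ [gm c]" by simp
  also have "... \<sim>\<sim> [] @ [] @ [gm c]" by (rule eqv_ctx, rule R_gg) (use a in auto)
  finally show ?thesis by simp
qed

lemma gg4: "1 \<le> a \<Longrightarrow> a \<le> n \<Longrightarrow> 1 \<le> c \<Longrightarrow> c \<le> n \<Longrightarrow> [gm c, gm a, gm a] \<sim>\<sim> [gm c]"
  using eqv_l[OF R_gg[of a n], of "[gm c]"] by simp

lemma gam_plw: assumes ij: "1 \<le> i" "i < j" "j \<le> n" and b: "b \<in> Bs i j" and k: "1 \<le> k" "k \<le> n"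
  shows "\<exists>b'\<in>Bs i j. [gm k] @ plw i j b @ [gm k] \<sim>\<sim> plw i j b'"
proof -
  have e1: "[gm k] @ plw i j b @ [gm k] \<sim>\<sim> cw (lam_word i j) (b @ [gm k])"
  proof -
    have "[gm k] @ plw i j b @ [gm k] = [gm k] @ (invw b @ lam_word i j @ b @ [gm k])"
      by (simp add: plw_def cw_def)
    also have "... \<sim>\<sim> [(G k, True)] @ (invw b @ lam_word i j @ b @ [gm k])"
      by (rule eqv_r, rule eqv_sym, rule inv_gm) (use k in auto)
    also have "... = cw (lam_word i j) (b @ [gm k])" by (simp add: cw_def letter_inv_def)
    finally show ?thesis .
  qed
  have bb: "b = [] \<or> b = [gm i] \<or> b = [gm j] \<or> b = [gm i, gm j]" using b by (simp add: Bs_def)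
  have ijr: "1 \<le> j" "i \<le> n" using ij by auto
  consider "k = i" | "k = j" | "k \<noteq> i" "k \<noteq> j" by blast
  then show ?thesis
  proof cases
    case 1
    have "\<exists>b'\<in>Bs i j. b @ [gm k] \<sim>\<sim> b'"
      using bb 1 ij ijr R_gg[of i n] R_gcomm[of j n i] gg3[of i j] unfolding Bs_def
      by (elim disjE) (auto intro: eqv_refl)
    then obtain b' where "b' \<in> Bs i j" "b @ [gm k] \<sim>\<sim> b'" by blast
    moreover have "cw (lam_word i j) (b @ [gm k]) \<sim>\<sim> cw (lam_word i j) b'"
      by (rule cw_cong[OF eqv_refl]) fact
    ultimately show ?thesis using e1 tvb_eqv.trans unfolding plw_def by blast
  next
    case 2
    have "\<exists>b'\<in>Bs i j. b @ [gm k] \<sim>\<sim> b'"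
      using bb 2 ij ijr R_gg[of j n] gg4[of j i] unfolding Bs_def
      by (elim disjE) (auto intro: eqv_refl)
    then obtain b' where "b' \<in> Bs i j" "b @ [gm k] \<sim>\<sim> b'" by blast
    moreover have "cw (lam_word i j) (b @ [gm k]) \<sim>\<sim> cw (lam_word i j) b'"
      by (rule cw_cong[OF eqv_refl]) fact
    ultimately show ?thesis using e1 tvb_eqv.trans unfolding plw_def by blast
  next
    case 3
    have c1: "b @ [gm k] \<sim>\<sim> [gm k] @ b"
    proof (rule eqv_sym, rule comm_word)
      fix y assume "y \<in> set b"
      then have "y = gm i \<or> y = gm j" using bb by auto
      then show "[gm k, y] \<sim>\<sim> [y, gm k]" using k ij ijr by (auto intro: R_gcomm)
    qed
    have c2: "cw (lam_word i j) [gm k] \<sim>\<sim> lam_word i j"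
    proof -
      have "cw (lam_word i j) [gm k] = [(G k, True)] @ lam_word i j @ [gm k]" by (simp add: cw_def letter_inv_def)
      also have "... \<sim>\<sim> [gm k] @ lam_word i j @ [gm k]" by (rule eqv_r, rule inv_gm) (use k in auto)
      also have "... = ([gm k] @ lam_word i j) @ [gm k]" by simp
      also have "... \<sim>\<sim> (lam_word i j @ [gm k]) @ [gm k]" by (rule eqv_r, rule F2w) (use k ij 3 in auto)
      also have "... = lam_word i j @ [gm k, gm k]" by simp
      also have "... \<sim>\<sim> lam_word i j @ []" by (rule eqv_l, rule R_gg) (use k in auto)
      finally show ?thesis by simp
    qed
    have "cw (lam_word i j) (b @ [gm k]) \<sim>\<sim> cw (lam_word i j) ([gm k] @ b)"
      by (rule cw_cong[OF eqv_refl c1])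
    also have "... = cw (cw (lam_word i j) [gm k]) b" by (simp add: cw_cw)
    also have "... \<sim>\<sim> cw (lam_word i j) b" by (rule cw_cong[OF c2 eqv_refl])
    finally show ?thesis using e1 tvb_eqv.trans b unfolding plw_def by blast
  qed
qed


lemma gm_shift: "1 \<le> m \<Longrightarrow> m \<le> n - 1 \<Longrightarrow> (\<forall>x\<in>set B. 1 \<le> x \<and> x \<le> n) \<Longrightarrow>
   map gm B @ [rh m] \<sim>\<sim> [rh m] @ map gm (map (transpose m (m+1)) B)"
proof (induction B)
  case Nil then show ?case by (simp add: eqv_refl)
next
  case (Cons x B)
  have "map gm (x # B) @ [rh m] = [gm x] @ (map gm B @ [rh m])" by simp
  also have "... \<sim>\<sim> [gm x] @ ([rh m] @ map gm (map (transpose m (m+1)) B))"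
    by (rule eqv_l, rule Cons.IH) (use Cons.prems in auto)
  also have "... = [gm x, rh m] @ map gm (map (transpose m (m+1)) B)" by simp
  also have "... \<sim>\<sim> [rh m, gm (transpose m (m+1) x)] @ map gm (map (transpose m (m+1)) B)"
    by (rule eqv_r, rule R_gr_any) (use Cons.prems in auto)
  finally show ?case by simp
qed

lemma gm_shift_inv: assumes "1 \<le> m" "m \<le> n - 1" "\<forall>x\<in>set B. 1 \<le> x \<and> x \<le> n"
  shows "[rh m] @ invw (map gm B) \<sim>\<sim> invw (map gm (map (transpose m (m+1)) B)) @ [rh m]"
proof -
  have "invw (map gm B @ [rh m]) \<sim>\<sim> invw ([rh m] @ map gm (map (transpose m (m+1)) B))"
    by (rule eqv_invw, rule gm_shift) (use assms in auto)
  then have h: "[(R m, True)] @ invw (map gm B) \<sim>\<sim> invw (map gm (map (transpose m (m+1)) B)) @ [(R m, True)]"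
    by (simp add: letter_inv_def)
  have r: "[(R m, True)] \<sim>\<sim> [rh m]" by (rule inv_rh) (use assms in auto)
  have "[rh m] @ invw (map gm B) \<sim>\<sim> [(R m, True)] @ invw (map gm B)" by (rule eqv_r, rule eqv_sym, rule r)
  also have "... \<sim>\<sim> invw (map gm (map (transpose m (m+1)) B)) @ [(R m, True)]" by (rule h)
  also have "... \<sim>\<sim> invw (map gm (map (transpose m (m+1)) B)) @ [rh m]" by (rule eqv_l, rule r)
  finally show ?thesis .
qed

lemma rho_plw: assumes m: "1 \<le> m" "m \<le> n - 1" and ij: "1 \<le> i" "i < j" "j \<le> n" and b: "b \<in> Bs i j"
  shows "\<exists>a c bb C. 1 \<le> a \<and> a < c \<and> c \<le> n \<and> bb \<in> Bs a c \<and> (\<forall>x\<in>set C. 1 \<le> x \<and> x \<le> n) \<and>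
     [rh m] @ plw i j b @ [rh m] \<sim>\<sim> cw (plw a c bb) (map gm C)"
proof -
  have "b = map gm [] \<or> b = map gm [i] \<or> b = map gm [j] \<or> b = map gm [i, j]" using b by (simp add: Bs_def)
  then have "\<exists>B. b = map gm B \<and> set B \<subseteq> {i, j}"
  proof (elim disjE)
  qed (rule exI, rule conjI, assumption, simp)+
  then obtain B where B0: "b = map gm B" "set B \<subseteq> {i, j}" by blast
  have B: "b = map gm B" "\<forall>x\<in>set B. 1 \<le> x \<and> x \<le> n" using B0 ij by auto
  define C where "C = map (transpose m (m+1)) B"
  have Cr: "\<forall>x\<in>set C. 1 \<le> x \<and> x \<le> n" using B(2) transpose_range[of m n] m unfolding C_def by auto
  have main: "[rh m] @ plw i j b @ [rh m] \<sim>\<sim> cw ([rh m] @ lam_word i j @ [rh m]) (map gm C)"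
  proof -
    have "[rh m] @ plw i j b @ [rh m] = ([rh m] @ invw (map gm B)) @ lam_word i j @ (map gm B @ [rh m])"
      by (simp add: plw_def cw_def B)
    also have "... \<sim>\<sim> (invw (map gm C) @ [rh m]) @ lam_word i j @ ([rh m] @ map gm C)"
      unfolding C_def by (rule eqv_app[OF gm_shift_inv[OF m B(2)] eqv_app[OF eqv_refl gm_shift[OF m B(2)]]])
    also have "... = cw ([rh m] @ lam_word i j @ [rh m]) (map gm C)" by (simp add: cw_def)
    finally show ?thesis .
  qed
  from F3w[OF m ij] show ?thesis
  proof (elim disjE exE conjE)
    fix a c assume ac: "1 \<le> a" "a < c" "c \<le> n" "[rh m] @ lam_word i j @ [rh m] \<sim>\<sim> lam_word a c"
    have "cw ([rh m] @ lam_word i j @ [rh m]) (map gm C) \<sim>\<sim> cw (plw a c []) (map gm C)"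
      by (rule cw_cong[OF _ eqv_refl]) (use ac in \<open>simp add: plw_def cw_def\<close>)
    then show ?thesis using main ac Cr tvb_eqv.trans unfolding Bs_def by blast
  next
    assume h: "j = Suc i" "m = i" "[rh m] @ lam_word i j @ [rh m] \<sim>\<sim> [gm (i+1), gm i, rh i, sgi i, gm i, gm (i+1)]"
    have g2: "[gm (i+1)] @ [gm i] \<sim>\<sim> [(G (i+1), True)] @ [(G i, True)]"
      by (rule eqv_app; rule eqv_sym; rule inv_gm) (use ij h in auto)
    have "[gm (i+1), gm i, rh i, sgi i, gm i, gm (i+1)] \<sim>\<sim> [(G (i+1), True), (G i, True)] @ [rh i, sgi i, gm i, gm (i+1)]"
      using eqv_r[OF g2, of "[rh i, sgi i, gm i, gm (i+1)]"] by simp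
    also have "... = plw i j [gm i, gm j]" using h by (simp add: plw_def cw_def lam_word_def letter_inv_def)
    finally have "[rh m] @ lam_word i j @ [rh m] \<sim>\<sim> plw i j [gm i, gm j]" using h(3) tvb_eqv.trans by blast
    then have "cw ([rh m] @ lam_word i j @ [rh m]) (map gm C) \<sim>\<sim> cw (plw i j [gm i, gm j]) (map gm C)"
      by (rule cw_cong[OF _ eqv_refl])
    then show ?thesis using main ij Cr tvb_eqv.trans unfolding Bs_def by blast
  qed
qed


abbreviation Gen where "Gen \<equiv> generate GG (PL_gens n)"
abbreviation Gam where "Gam \<equiv> {gamma n j | j. 1 \<le> j \<and> j \<le> n}"

lemma An_eq: "An n = generate GG Gam" by (simp add: An_def)

lemma perm_gmw: "perm_of_word (map gm C) = id"
  by (induction C) auto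

lemma perm_invw_gmw: "perm_of_word (invw (map gm C)) = id"
  by (rule perm_invw_id, rule perm_gmw)

lemma tt_id: "transpose i (i+1) \<circ> transpose i (i+1) = id"
  by (auto simp: fun_eq_iff transpose_def)

lemma tt2: "transpose i (Suc i) \<circ> (transpose i (Suc i) \<circ> f) = f"
  by (auto simp: fun_eq_iff transpose_def)

lemma perm_lam: assumes "1 \<le> i" "i < j" "j \<le> n" shows "perm_of_word (lam_word i j) = id"
proof -
  have v: "vi n [Suc i..<j]" using assms by (auto simp: vi_def)
  have "perm_of_word (rw (rev [Suc i..<j]) @ rw [Suc i..<j]) = perm_of_word []"
    by (rule perm_eqv, rule rw_cancel2[OF v])
  then have "perm_of_word (rw (rev [Suc i..<j])) \<circ> perm_of_word (rw [Suc i..<j]) = id"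
    by (simp add: perm_append)
  moreover have "perm_of_word (lam_word i j) = perm_of_word (rw (rev [Suc i..<j])) \<circ> perm_of_word (rw [Suc i..<j])"
    using assms by (simp add: lam_lt perm_append tt2)
  ultimately show ?thesis by simp
qed

lemma Bs_gm: "b \<in> Bs i j \<Longrightarrow> \<exists>C. b = map gm C \<and> set C \<subseteq> {i, j}"
proof -
  assume "b \<in> Bs i j"
  then have "b = map gm [] \<or> b = map gm [i] \<or> b = map gm [j] \<or> b = map gm [i, j]" by (simp add: Bs_def)
  then show ?thesis
  proof (elim disjE)
  qed (rule exI, rule conjI, assumption, simp)+
qed

lemma plw_TVP: assumes "1 \<le> i" "i < j" "j \<le> n" "b \<in> Bs i j" shows "cl (plw i j b) \<in> TVP n"
proof -
  obtain C where C: "b = map gm C" "set C \<subseteq> {i, j}" using Bs_gm[OF assms(4)] by blast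
  have vb: "valid_word n b" using C assms by (auto simp: valid_word_def)
  show ?thesis
    by (rule TVP_tcls) (use vb valid_lam[OF assms(1-3)] perm_lam[OF assms(1-3)] C in
        \<open>auto simp: plw_def cw_def perm_append perm_gmw perm_invw_gmw\<close>)
qed

lemma PL_TVP: "PL_gens n \<subseteq> TVP n"
  using plw_TVP by (auto simp: PL_gens_char)

lemma Gam_TVP: "Gam \<subseteq> TVP n"
  by (auto simp: gamma_def intro!: TVP_tcls)

lemma Gen_sub: "subgroup Gen GG"
  using group.generate_is_subgroup[OF group_TVB] PL_TVP TVP_sub by blast

lemma An_sub: "subgroup (An n) GG"
  unfolding An_eq using group.generate_is_subgroup[OF group_TVB] Gam_TVP TVP_sub by blast

lemma Gen_TVP: "Gen \<subseteq> TVP n"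
  using group.generate_subgroup_incl[OF group_TVB PL_TVP subgroup_TVP] .

lemma An_TVP: "An n \<subseteq> TVP n"
  unfolding An_eq using group.generate_subgroup_incl[OF group_TVB Gam_TVP subgroup_TVP] .

lemma gm_carrier: "1 \<le> k \<Longrightarrow> k \<le> n \<Longrightarrow> cl [gm k] \<in> carrier GG"
  by (rule tcls_carrier) simp

lemma rh_carrier: "1 \<le> k \<Longrightarrow> k \<le> n - 1 \<Longrightarrow> cl [rh k] \<in> carrier GG"
  by (rule tcls_carrier) simp

lemma gm_sq: "1 \<le> k \<Longrightarrow> k \<le> n \<Longrightarrow> cl [gm k] \<otimes>\<^bsub>GG\<^esub> cl [gm k] = \<one>\<^bsub>GG\<^esub>"
  by (simp add: mult_tcls one_TVB tcls_eq R_gg)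

lemma rh_sq: "1 \<le> k \<Longrightarrow> k \<le> n - 1 \<Longrightarrow> cl [rh k] \<otimes>\<^bsub>GG\<^esub> cl [rh k] = \<one>\<^bsub>GG\<^esub>"
  by (simp add: mult_tcls one_TVB tcls_eq R_rr)

lemma N1: assumes k: "1 \<le> k" "k \<le> n" and g: "g \<in> Gen" shows "cl [gm k] \<otimes>\<^bsub>GG\<^esub> g \<otimes>\<^bsub>GG\<^esub> cl [gm k] \<in> Gen"
proof (rule group.conj_gen[OF group_TVB gm_carrier[OF k] gm_sq[OF k] _ Gen_sub _ g])
  show "PL_gens n \<subseteq> carrier GG" using PL_TVP TVP_sub by blast
next
  fix h assume "h \<in> PL_gens n"
  then obtain i j b where ij: "1 \<le> i" "i < j" "j \<le> n" "b \<in> Bs i j" and h: "h = cl (plw i j b)"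
    by (auto simp: PL_gens_char)
  obtain b' where b': "b' \<in> Bs i j" "[gm k] @ plw i j b @ [gm k] \<sim>\<sim> plw i j b'"
    using gam_plw[OF ij k] by blast
  have "cl [gm k] \<otimes>\<^bsub>GG\<^esub> h \<otimes>\<^bsub>GG\<^esub> cl [gm k] = cl (plw i j b')"
    using b'(2) by (simp add: h mult_tcls tcls_eq)
  moreover have "cl (plw i j b') \<in> PL_gens n" using ij b' by (auto simp: PL_gens_char)
  ultimately show "cl [gm k] \<otimes>\<^bsub>GG\<^esub> h \<otimes>\<^bsub>GG\<^esub> cl [gm k] \<in> Gen"
    by (simp add: generate.incl)
qed

lemma N2: assumes c: "c \<in> An n" shows "\<forall>g\<in>Gen. inv\<^bsub>GG\<^esub> c \<otimes>\<^bsub>GG\<^esub> g \<otimes>\<^bsub>GG\<^esub> c \<in> Gen"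
  using c unfolding An_eq
proof induction
  case one
  interpret group GG by (rule group_TVB)
  show ?case
  proof
    fix g assume g: "g \<in> Gen"
    have "g \<in> carrier GG" using subgroup.mem_carrier[OF Gen_sub g] .
    then show "inv\<^bsub>GG\<^esub> \<one>\<^bsub>GG\<^esub> \<otimes>\<^bsub>GG\<^esub> g \<otimes>\<^bsub>GG\<^esub> \<one>\<^bsub>GG\<^esub> \<in> Gen" using g by simp
  qed
next
  case (incl h)
  interpret group GG by (rule group_TVB)
  from incl obtain k where k: "1 \<le> k" "k \<le> n" "h = cl [gm k]" by (auto simp: gamma_def)
  have "inv\<^bsub>GG\<^esub> h = h" using k gm_sq[OF k(1,2)] gm_carrier[OF k(1,2)] by (intro inv_equality) auto
  then show ?case using N1[OF k(1,2)] k by auto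
next
  case (inv h)
  interpret group GG by (rule group_TVB)
  from inv obtain k where k: "1 \<le> k" "k \<le> n" "h = cl [gm k]" by (auto simp: gamma_def)
  have "inv\<^bsub>GG\<^esub> h = h" using k gm_sq[OF k(1,2)] gm_carrier[OF k(1,2)] by (intro inv_equality) auto
  then show ?case using N1[OF k(1,2)] k by auto
next
  case (eng c1 c2)
  interpret group GG by (rule group_TVB)
  have gs: "Gam \<subseteq> carrier GG" using Gam_TVP TVP_sub by blast
  have cc: "c1 \<in> carrier GG" "c2 \<in> carrier GG"
    using generate_in_carrier[OF gs eng.hyps(1)] generate_in_carrier[OF gs eng.hyps(2)] by auto
  show ?case
  proof
    fix g assume g: "g \<in> Gen"
    have gc: "g \<in> carrier GG" using subgroup.mem_carrier[OF Gen_sub g] .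
    have "inv\<^bsub>GG\<^esub> (c1 \<otimes>\<^bsub>GG\<^esub> c2) \<otimes>\<^bsub>GG\<^esub> g \<otimes>\<^bsub>GG\<^esub> (c1 \<otimes>\<^bsub>GG\<^esub> c2) = inv\<^bsub>GG\<^esub> c2 \<otimes>\<^bsub>GG\<^esub> (inv\<^bsub>GG\<^esub> c1 \<otimes>\<^bsub>GG\<^esub> g \<otimes>\<^bsub>GG\<^esub> c1) \<otimes>\<^bsub>GG\<^esub> c2"
      using cc gc by (simp add: inv_mult_group m_assoc)
    also have "... \<in> Gen" using eng.IH g by blast
    finally show "inv\<^bsub>GG\<^esub> (c1 \<otimes>\<^bsub>GG\<^esub> c2) \<otimes>\<^bsub>GG\<^esub> g \<otimes>\<^bsub>GG\<^esub> (c1 \<otimes>\<^bsub>GG\<^esub> c2) \<in> Gen" .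
  qed
qed

lemma gmw_An: "\<forall>x\<in>set C. 1 \<le> x \<and> x \<le> n \<Longrightarrow> cl (map gm C) \<in> An n"
proof (induction C)
  case Nil then show ?case using subgroup.one_closed[OF An_sub] by (simp add: one_TVB)
next
  case (Cons x C)
  have "cl (map gm (x # C)) = cl [gm x] \<otimes>\<^bsub>GG\<^esub> cl (map gm C)" by (simp add: mult_tcls)
  moreover have "cl [gm x] \<in> An n" unfolding An_eq using Cons.prems
    by (intro generate.incl) (auto simp: gamma_def)
  ultimately show ?case using subgroup.m_closed[OF An_sub] Cons by auto
qed

lemma N3: assumes m: "1 \<le> m" "m \<le> n - 1" and g: "g \<in> Gen" shows "cl [rh m] \<otimes>\<^bsub>GG\<^esub> g \<otimes>\<^bsub>GG\<^esub> cl [rh m] \<in> Gen"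
proof (rule group.conj_gen[OF group_TVB rh_carrier[OF m] rh_sq[OF m] _ Gen_sub _ g])
  show "PL_gens n \<subseteq> carrier GG" using PL_TVP TVP_sub by blast
next
  fix h assume "h \<in> PL_gens n"
  then obtain i j b where ij: "1 \<le> i" "i < j" "j \<le> n" "b \<in> Bs i j" and h: "h = cl (plw i j b)"
    by (auto simp: PL_gens_char)
  obtain a c bb C where r: "1 \<le> a" "a < c" "c \<le> n" "bb \<in> Bs a c" "\<forall>x\<in>set C. 1 \<le> x \<and> x \<le> n"
     "[rh m] @ plw i j b @ [rh m] \<sim>\<sim> cw (plw a c bb) (map gm C)"
    using rho_plw[OF m ij] by blast
  have vC: "valid_word n (map gm C)" using r(5) by (auto simp: valid_word_def)
  have "cl [rh m] \<otimes>\<^bsub>GG\<^esub> h \<otimes>\<^bsub>GG\<^esub> cl [rh m] = cl (cw (plw a c bb) (map gm C))"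
    using r(6) by (simp add: h mult_tcls tcls_eq)
  also have "... = inv\<^bsub>GG\<^esub> (cl (map gm C)) \<otimes>\<^bsub>GG\<^esub> cl (plw a c bb) \<otimes>\<^bsub>GG\<^esub> cl (map gm C)"
    by (rule cl_cw[OF vC])
  also have "... \<in> Gen"
  proof -
    have "cl (plw a c bb) \<in> Gen" using r by (intro generate.incl) (auto simp: PL_gens_char)
    then show ?thesis using N2[OF gmw_An[OF r(5)]] by blast
  qed
  finally show "cl [rh m] \<otimes>\<^bsub>GG\<^esub> h \<otimes>\<^bsub>GG\<^esub> cl [rh m] \<in> Gen" .
qed

lemma N4: assumes m: "1 \<le> m" "m \<le> n - 1" and c: "c \<in> An n" shows "cl [rh m] \<otimes>\<^bsub>GG\<^esub> c \<otimes>\<^bsub>GG\<^esub> cl [rh m] \<in> An n"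
proof (rule group.conj_gen[OF group_TVB rh_carrier[OF m] rh_sq[OF m] _ An_sub])
  show "Gam \<subseteq> carrier GG" using Gam_TVP TVP_sub by blast
next
  show "c \<in> generate GG Gam" using c by (simp add: An_eq)
next
  fix h assume "h \<in> Gam"
  then obtain k where k: "1 \<le> k" "k \<le> n" "h = cl [gm k]" by (auto simp: gamma_def)
  have "[rh m, gm k, rh m] \<sim>\<sim> [gm (transpose m (m+1) k)]"
  proof -
    have "[rh m, gm k, rh m] = [rh m] @ [gm k, rh m] @ []" by simp
    also have "... \<sim>\<sim> [rh m] @ [rh m, gm (transpose m (m+1) k)] @ []"
      by (rule eqv_ctx, rule R_gr_any) (use m k in auto)
    also have "... = [rh m, rh m] @ [gm (transpose m (m+1) k)]" by simp
    also have "... \<sim>\<sim> [] @ [gm (transpose m (m+1) k)]" by (rule eqv_r, rule R_rr) (use m in auto)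
    finally show ?thesis by simp
  qed
  then have "cl [rh m] \<otimes>\<^bsub>GG\<^esub> h \<otimes>\<^bsub>GG\<^esub> cl [rh m] = gamma n (transpose m (m+1) k)"
    by (simp add: k mult_tcls tcls_eq gamma_def)
  moreover have "gamma n (transpose m (m+1) k) \<in> An n"
    unfolding An_eq using transpose_range[OF m k(1,2)] by (intro generate.incl) auto
  ultimately show "cl [rh m] \<otimes>\<^bsub>GG\<^esub> h \<otimes>\<^bsub>GG\<^esub> cl [rh m] \<in> An n" by simp
qed

end




context fixes n :: nat begin
abbreviation eqv5 (infix "\<sim>\<sim>" 50) where "u \<sim>\<sim> v \<equiv> tvb_eqv n u v"

lemma rr_cancel: "1 \<le> m \<Longrightarrow> m \<le> n - 1 \<Longrightarrow> z \<in> carrier (TVB n) \<Longrightarrow>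
  tcls n [rh m] \<otimes>\<^bsub>TVB n\<^esub> (tcls n [rh m] \<otimes>\<^bsub>TVB n\<^esub> z) = z"
proof -
  assume a: "1 \<le> m" "m \<le> n - 1" "z \<in> carrier (TVB n)"
  interpret group "TVB n" by (rule group_TVB)
  show ?thesis using a rh_sq[OF a(1,2)] rh_carrier[OF a(1,2)] by (simp add: m_assoc[symmetric])
qed

lemma gg_cancel: "1 \<le> m \<Longrightarrow> m \<le> n \<Longrightarrow> z \<in> carrier (TVB n) \<Longrightarrow>
  tcls n [gm m] \<otimes>\<^bsub>TVB n\<^esub> (tcls n [gm m] \<otimes>\<^bsub>TVB n\<^esub> z) = z"
proof -
  assume a: "1 \<le> m" "m \<le> n" "z \<in> carrier (TVB n)"
  interpret group "TVB n" by (rule group_TVB)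
  show ?thesis using a gm_sq[OF a(1,2)] gm_carrier[OF a(1,2)] by (simp add: m_assoc[symmetric])
qed

lemma rho_step: assumes m: "1 \<le> m" "m \<le> n - 1" and g: "g \<in> Gen n" and c: "c \<in> An n" and L: "vi n L"
  shows "\<exists>g'\<in>Gen n. \<exists>c'\<in>An n. \<exists>L'. vi n L' \<and>
    tcls n [rh m] \<otimes>\<^bsub>TVB n\<^esub> (g \<otimes>\<^bsub>TVB n\<^esub> c \<otimes>\<^bsub>TVB n\<^esub> tcls n (rw L)) = g' \<otimes>\<^bsub>TVB n\<^esub> c' \<otimes>\<^bsub>TVB n\<^esub> tcls n (rw L')"
proof -
  interpret group "TVB n" by (rule group_TVB)
  let ?r = "tcls n [rh m]"
  have gc: "g \<in> carrier (TVB n)" using subgroup.mem_carrier[OF Gen_sub g] .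
  have cc: "c \<in> carrier (TVB n)" using subgroup.mem_carrier[OF An_sub c] .
  have vL: "valid_word n (rw L)" using L by (auto simp: vi_def valid_word_def)
  have Lc: "tcls n (rw L) \<in> carrier (TVB n)" using tcls_carrier[OF vL] .
  have rc: "?r \<in> carrier (TVB n)" using rh_carrier[OF m] .
  have "?r \<otimes>\<^bsub>TVB n\<^esub> (g \<otimes>\<^bsub>TVB n\<^esub> c \<otimes>\<^bsub>TVB n\<^esub> tcls n (rw L)) =
     (?r \<otimes>\<^bsub>TVB n\<^esub> g \<otimes>\<^bsub>TVB n\<^esub> ?r) \<otimes>\<^bsub>TVB n\<^esub> (?r \<otimes>\<^bsub>TVB n\<^esub> c \<otimes>\<^bsub>TVB n\<^esub> ?r) \<otimes>\<^bsub>TVB n\<^esub> (?r \<otimes>\<^bsub>TVB n\<^esub> tcls n (rw L))"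
    using gc cc Lc rc by (simp add: m_assoc rr_cancel[OF m])
  moreover have "?r \<otimes>\<^bsub>TVB n\<^esub> tcls n (rw L) = tcls n (rw (m # L))" by (simp add: mult_tcls)
  moreover have "vi n (m # L)" using m L by simp
  ultimately show ?thesis
    by (intro bexI[OF _ N3[OF m g]] bexI[OF _ N4[OF m c]] exI[of _ "m # L"]) simp
qed

lemma decomp: "valid_word n w \<Longrightarrow> \<exists>g\<in>Gen n. \<exists>c\<in>An n. \<exists>L. vi n L \<and>
    tcls n w = g \<otimes>\<^bsub>TVB n\<^esub> c \<otimes>\<^bsub>TVB n\<^esub> tcls n (rw L)"
proof (induction w)
  case Nil
  interpret group "TVB n" by (rule group_TVB)
  have "tcls n [] = \<one>\<^bsub>TVB n\<^esub> \<otimes>\<^bsub>TVB n\<^esub> \<one>\<^bsub>TVB n\<^esub> \<otimes>\<^bsub>TVB n\<^esub> tcls n (rw [])"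
    by (simp add: one_TVB mult_tcls)
  then show ?case using generate.one subgroup.one_closed[OF An_sub] by (metis vi_simps(1))
next
  case (Cons a w)
  interpret group "TVB n" by (rule group_TVB)
  have va: "valid_gen n (fst a)" and vw: "valid_word n w" using Cons.prems by auto
  obtain g c L where gcL: "g \<in> Gen n" "c \<in> An n" "vi n L" "tcls n w = g \<otimes>\<^bsub>TVB n\<^esub> c \<otimes>\<^bsub>TVB n\<^esub> tcls n (rw L)"
    using Cons.IH[OF vw] by blast
  have gc: "g \<in> carrier (TVB n)" using subgroup.mem_carrier[OF Gen_sub gcL(1)] .
  have cc: "c \<in> carrier (TVB n)" using subgroup.mem_carrier[OF An_sub gcL(2)] .
  have vL: "valid_word n (rw L)" using gcL(3) by (auto simp: vi_def valid_word_def)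
  have Lc: "tcls n (rw L) \<in> carrier (TVB n)" using tcls_carrier[OF vL] .
  have "tcls n (a # w) = tcls n [a] \<otimes>\<^bsub>TVB n\<^esub> tcls n w" by (simp add: mult_tcls)
  then have split: "tcls n (a # w) = tcls n [a] \<otimes>\<^bsub>TVB n\<^esub> (g \<otimes>\<^bsub>TVB n\<^esub> c \<otimes>\<^bsub>TVB n\<^esub> tcls n (rw L))"
    using gcL(4) by simp
  obtain x b where ab: "a = (x, b)" by (cases a)
  show ?case
  proof (cases x)
    case (G k)
    have k: "1 \<le> k" "k \<le> n" using va ab G by auto
    let ?y = "tcls n [gm k]"
    have ya: "tcls n [a] = ?y"
      using ab G inv_gm[OF k] by (cases b) (auto simp: tcls_eq eqv_refl)
    have yc: "?y \<in> carrier (TVB n)" using gm_carrier[OF k] .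
    have "tcls n (a # w) = (?y \<otimes>\<^bsub>TVB n\<^esub> g \<otimes>\<^bsub>TVB n\<^esub> ?y) \<otimes>\<^bsub>TVB n\<^esub> (?y \<otimes>\<^bsub>TVB n\<^esub> c) \<otimes>\<^bsub>TVB n\<^esub> tcls n (rw L)"
      using split ya gc cc Lc yc by (simp add: m_assoc gg_cancel[OF k])
    moreover have "?y \<otimes>\<^bsub>TVB n\<^esub> c \<in> An n"
    proof -
      have "?y \<in> An n" unfolding An_eq using k by (intro generate.incl) (auto simp: gamma_def)
      then show ?thesis using subgroup.m_closed[OF An_sub _ gcL(2)] by blast
    qed
    ultimately show ?thesis using N1[OF k gcL(1)] gcL(3) by blast
  next
    case (R m)
    have m: "1 \<le> m" "m \<le> n - 1" using va ab R by auto
    have ya: "tcls n [a] = tcls n [rh m]"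
      using ab R inv_rh[OF m] by (cases b) (auto simp: tcls_eq eqv_refl)
    show ?thesis using split ya rho_step[OF m gcL(1,2,3)] by simp
  next
    case (S m)
    have m: "1 \<le> m" "m \<le> n - 1" using va ab S by auto
    let ?l = "tcls n (lam_word m (Suc m))"
    let ?r = "tcls n [rh m]"
    have lw: "lam_word m (Suc m) = [rh m, sgi m]" by (simp add: lam_word_def)
    have lG: "?l \<in> Gen n"
    proof -
      have "?l = lambda n m (Suc m)" by (simp add: lambda_def)
      moreover have "lambda n m (Suc m) \<in> PL_gens n" unfolding PL_gens_def using m
        by (intro UN_I[of m] UN_I[of "Suc m"]) auto
      ultimately show ?thesis by (simp add: generate.incl)
    qed
    have lc: "?l \<in> carrier (TVB n)" using subgroup.mem_carrier[OF Gen_sub lG] .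
    have rc: "?r \<in> carrier (TVB n)" using rh_carrier[OF m] .
    show ?thesis
    proof (cases b)
      case False
      have "[sg m] \<sim>\<sim> invw (lam_word m (Suc m)) @ [rh m]"
      proof -
        have "[sg m, (R m, True), rh m] = [sg m] @ [(R m, True), letter_inv (R m, True)]" by (simp add: letter_inv_def)
        also have "... \<sim>\<sim> [sg m] @ []" by (rule eqv_l, rule cancel1)
        finally show ?thesis by (simp add: lw letter_inv_def eqv_sym)
      qed
      then have ya: "tcls n [a] = inv\<^bsub>TVB n\<^esub> ?l \<otimes>\<^bsub>TVB n\<^esub> ?r"
        using ab S False valid_lam[of m "Suc m" n] m by (simp add: inv_tcls mult_tcls tcls_eq)
      have "tcls n (a # w) = inv\<^bsub>TVB n\<^esub> ?l \<otimes>\<^bsub>TVB n\<^esub> (?r \<otimes>\<^bsub>TVB n\<^esub> (g \<otimes>\<^bsub>TVB n\<^esub> c \<otimes>\<^bsub>TVB n\<^esub> tcls n (rw L)))"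
        using split ya lc rc gc cc Lc by (simp add: m_assoc)
      moreover obtain g' c' L' where st: "g' \<in> Gen n" "c' \<in> An n" "vi n L'"
        "?r \<otimes>\<^bsub>TVB n\<^esub> (g \<otimes>\<^bsub>TVB n\<^esub> c \<otimes>\<^bsub>TVB n\<^esub> tcls n (rw L)) = g' \<otimes>\<^bsub>TVB n\<^esub> c' \<otimes>\<^bsub>TVB n\<^esub> tcls n (rw L')"
        using rho_step[OF m gcL(1,2,3)] by blast
      moreover have "inv\<^bsub>TVB n\<^esub> ?l \<otimes>\<^bsub>TVB n\<^esub> g' \<in> Gen n"
        using subgroup.m_closed[OF Gen_sub subgroup.m_inv_closed[OF Gen_sub lG] st(1)] .
      moreover have "g' \<in> carrier (TVB n)" "c' \<in> carrier (TVB n)"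
        using subgroup.mem_carrier[OF Gen_sub st(1)] subgroup.mem_carrier[OF An_sub st(2)] .
      moreover have "valid_word n (rw L')" using st(3) by (auto simp: vi_def valid_word_def)
      ultimately show ?thesis using lc
        by (intro bexI[of _ "inv\<^bsub>TVB n\<^esub> ?l \<otimes>\<^bsub>TVB n\<^esub> g'"] bexI[of _ c'] exI[of _ L'])
           (auto simp: m_assoc tcls_carrier)
    next
      case True
      have "[sgi m] \<sim>\<sim> [rh m] @ lam_word m (Suc m)"
      proof -
        have "[rh m] @ lam_word m (Suc m) = [rh m, rh m] @ [sgi m]" by (simp add: lw)
        also have "... \<sim>\<sim> [] @ [sgi m]" by (rule eqv_r, rule R_rr) (use m in auto)
        finally show ?thesis by (simp add: eqv_sym)
      qed
      then have ya: "tcls n [a] = ?r \<otimes>\<^bsub>TVB n\<^esub> ?l"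
        using ab S True by (simp add: mult_tcls tcls_eq)
      have gl: "?l \<otimes>\<^bsub>TVB n\<^esub> g \<in> Gen n" using subgroup.m_closed[OF Gen_sub lG gcL(1)] .
      have "tcls n (a # w) = ?r \<otimes>\<^bsub>TVB n\<^esub> ((?l \<otimes>\<^bsub>TVB n\<^esub> g) \<otimes>\<^bsub>TVB n\<^esub> c \<otimes>\<^bsub>TVB n\<^esub> tcls n (rw L))"
        using split ya lc rc gc cc Lc by (simp add: m_assoc)
      then show ?thesis using rho_step[OF m gl gcL(2,3)] by simp
    qed
  qed
qed

end

theorem mainTheorem6:
  fixes n :: nat and \<psi> :: "tword set \<Rightarrow> tword set"
  assumes "n \<ge> 2"
    and "is_psiP n \<psi>"
  shows "generate (TVB n) (PL_gens n) = kernel ((TVB n)\<lparr>carrier := TVP n\<rparr>) ((TVB n)\<lparr>carrier := An n\<rparr>) \<psi>"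
proof -
  interpret group "TVB n" by (rule group_TVB)
  have hom: "\<psi> \<in> hom ((TVB n)\<lparr>carrier := TVP n\<rparr>) ((TVB n)\<lparr>carrier := An n\<rparr>)"
    and psl: "\<And>k l. 1 \<le> k \<Longrightarrow> k \<le> n \<Longrightarrow> 1 \<le> l \<Longrightarrow> l \<le> n \<Longrightarrow> k \<noteq> l \<Longrightarrow> \<psi> (lambda n k l) = \<one>\<^bsub>TVB n\<^esub>"
    and psg: "\<And>j. 1 \<le> j \<Longrightarrow> j \<le> n \<Longrightarrow> \<psi> (gamma n j) = gamma n j"
    using assms(2) unfolding is_psiP_def by auto
  have psi_in: "\<psi> x \<in> An n" if "x \<in> TVP n" for x
    using hom that unfolding hom_def by auto
  have psi_c: "\<psi> x \<in> carrier (TVB n)" if "x \<in> TVP n" for x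
    using psi_in[OF that] subgroup.mem_carrier[OF An_sub] by blast
  have psi_mult: "\<psi> (x \<otimes>\<^bsub>TVB n\<^esub> y) = \<psi> x \<otimes>\<^bsub>TVB n\<^esub> \<psi> y" if "x \<in> TVP n" "y \<in> TVP n" for x y
    using hom that unfolding hom_def by auto
  have TVPc: "x \<in> carrier (TVB n)" if "x \<in> TVP n" for x using that TVP_sub by blast
  have one_T: "\<one>\<^bsub>TVB n\<^esub> \<in> TVP n" using subgroup.one_closed[OF subgroup_TVP] .
  have psi_one: "\<psi> \<one>\<^bsub>TVB n\<^esub> = \<one>\<^bsub>TVB n\<^esub>"
  proof -
    have "\<psi> \<one>\<^bsub>TVB n\<^esub> \<otimes>\<^bsub>TVB n\<^esub> \<psi> \<one>\<^bsub>TVB n\<^esub> = \<psi> \<one>\<^bsub>TVB n\<^esub>"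
      using psi_mult[OF one_T one_T] by simp
    then show ?thesis using psi_c[OF one_T] by simp
  qed
  have psi_inv: "\<psi> (inv\<^bsub>TVB n\<^esub> x) = inv\<^bsub>TVB n\<^esub> (\<psi> x)" if "x \<in> TVP n" for x
  proof -
    have ix: "inv\<^bsub>TVB n\<^esub> x \<in> TVP n" using subgroup.m_inv_closed[OF subgroup_TVP that] .
    have "\<psi> (inv\<^bsub>TVB n\<^esub> x) \<otimes>\<^bsub>TVB n\<^esub> \<psi> x = \<one>\<^bsub>TVB n\<^esub>"
      using psi_mult[OF ix that] psi_one TVPc[OF that] by simp
    then show ?thesis using psi_c[OF ix] psi_c[OF that] by (intro inv_equality[symmetric]) auto
  qed
  have psi_An: "\<psi> c = c" if "c \<in> An n" for c
    using that unfolding An_eq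
  proof induction
    case one then show ?case using psi_one by simp
  next
    case (incl h) then show ?case using psg by auto
  next
    case (inv h)
    then obtain j where j: "1 \<le> j" "j \<le> n" "h = gamma n j" by auto
    have "h \<in> TVP n" using inv Gam_TVP by blast
    then show ?case using psi_inv j psg by simp
  next
    case (eng a b)
    have "a \<in> TVP n" "b \<in> TVP n" using eng.hyps An_TVP unfolding An_eq by auto
    then show ?case using psi_mult eng.IH by simp
  qed
  have psi_PL: "\<psi> h = \<one>\<^bsub>TVB n\<^esub>" if "h \<in> PL_gens n" for h
  proof -
    from that obtain i j b where ij: "1 \<le> i" "i < j" "j \<le> n" "b \<in> Bs i j" and h: "h = tcls n (plw i j b)"
      by (auto simp: PL_gens_char)
    obtain C where C: "b = map gm C" "set C \<subseteq> {i, j}" using Bs_gm[OF ij(4)] by blast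
    have vb: "valid_word n b" using C ij by (auto simp: valid_word_def)
    have bT: "tcls n b \<in> TVP n" using vb C by (auto intro!: TVP_tcls simp: perm_gmw)
    have lT: "lambda n i j \<in> TVP n"
      using valid_lam[OF ij(1-3)] perm_lam[OF ij(1-3)] by (auto intro!: TVP_tcls simp: lambda_def)
    have ibT: "inv\<^bsub>TVB n\<^esub> (tcls n b) \<in> TVP n" using subgroup.m_inv_closed[OF subgroup_TVP bT] .
    have "h = inv\<^bsub>TVB n\<^esub> (tcls n b) \<otimes>\<^bsub>TVB n\<^esub> lambda n i j \<otimes>\<^bsub>TVB n\<^esub> tcls n b"
      unfolding h plw_def lambda_def using cl_cw[OF vb] by simp
    then have "\<psi> h = inv\<^bsub>TVB n\<^esub> (\<psi> (tcls n b)) \<otimes>\<^bsub>TVB n\<^esub> \<psi> (lambda n i j) \<otimes>\<^bsub>TVB n\<^esub> \<psi> (tcls n b)"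
      using psi_mult psi_inv[OF bT] ibT lT bT subgroup.m_closed[OF subgroup_TVP ibT lT] by simp
    also have "... = \<one>\<^bsub>TVB n\<^esub>" using psl[of i j] ij psi_c[OF bT] by simp
    finally show ?thesis .
  qed
  have psi_Gen: "\<psi> g = \<one>\<^bsub>TVB n\<^esub>" if "g \<in> Gen n" for g
    using that
  proof induction
    case one then show ?case using psi_one by simp
  next
    case (incl h) then show ?case by (rule psi_PL)
  next
    case (inv h)
    then have "h \<in> TVP n" using PL_TVP by blast
    then show ?case using psi_inv psi_PL[OF inv] by simp
  next
    case (eng a b)
    have "a \<in> TVP n" "b \<in> TVP n" using eng.hyps Gen_TVP by auto
    then show ?case using psi_mult eng.IH by simp
  qed
  have ker: "Coset.kernel ((TVB n)\<lparr>carrier := TVP n\<rparr>) ((TVB n)\<lparr>carrier := An n\<rparr>) \<psi> =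
      {x. x \<in> TVP n \<and> \<psi> x = \<one>\<^bsub>TVB n\<^esub>}"
    by (simp add: kernel_def)
  have eq: "Gen n = {x. x \<in> TVP n \<and> \<psi> x = \<one>\<^bsub>TVB n\<^esub>}"
  proof (intro equalityI subsetI)
    fix x assume "x \<in> Gen n"
    then show "x \<in> {x. x \<in> TVP n \<and> \<psi> x = \<one>\<^bsub>TVB n\<^esub>}" using Gen_TVP psi_Gen by blast
  next
    fix x assume "x \<in> {x. x \<in> TVP n \<and> \<psi> x = \<one>\<^bsub>TVB n\<^esub>}"
    then have xT: "x \<in> TVP n" and px: "\<psi> x = \<one>\<^bsub>TVB n\<^esub>" by auto
    obtain w where w: "x = tcls n w" "valid_word n w" "perm_of_word w = id" using xT TVP_char by blast
    obtain g c L where gcL: "g \<in> Gen n" "c \<in> An n" "vi n L" "tcls n w = g \<otimes>\<^bsub>TVB n\<^esub> c \<otimes>\<^bsub>TVB n\<^esub> tcls n (rw L)"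
      using decomp[OF w(2)] by blast
    have gT: "g \<in> TVP n" using gcL(1) Gen_TVP by blast
    have cT: "c \<in> TVP n" using gcL(2) An_TVP by blast
    obtain u where u: "g = tcls n u" "valid_word n u" "perm_of_word u = id" using gT TVP_char by blast
    obtain v where v: "c = tcls n v" "valid_word n v" "perm_of_word v = id" using cT TVP_char by blast
    have "tcls n w = tcls n (u @ v @ rw L)" using gcL(4) u v by (simp add: mult_tcls)
    then have "tvb_eqv n w (u @ v @ rw L)" by (simp add: tcls_eq)
    then have "perm_of_word w = perm_of_word (u @ v @ rw L)" by (rule perm_eqv)
    then have pL: "perm_of_word (rw L) = id" using w(3) u(3) v(3) by (simp add: perm_append)
    have "tvb_eqv n (rw L) []" by (rule coxeter[of n n L]) (use gcL(3) pL in \<open>auto simp: vi_def\<close>)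
    then have "tcls n (rw L) = \<one>\<^bsub>TVB n\<^esub>" by (simp add: tcls_eq one_TVB)
    then have xgc: "x = g \<otimes>\<^bsub>TVB n\<^esub> c" using gcL(4) w(1) TVPc[OF gT] TVPc[OF cT] by simp
    have "\<psi> x = \<psi> g \<otimes>\<^bsub>TVB n\<^esub> \<psi> c" using psi_mult[OF gT cT] xgc by simp
    also have "... = c" using psi_Gen[OF gcL(1)] psi_An[OF gcL(2)] TVPc[OF cT] by simp
    finally have "c = \<one>\<^bsub>TVB n\<^esub>" using px by simp
    then have "x = g" using xgc TVPc[OF gT] by simp
    then show "x \<in> Gen n" using gcL(1) by simp
  qed
  show ?thesis using eq ker by simp
qed


end
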